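(* In the setting described in the context, every Casimir element $I_\ell$ ($\ell\in\mathbb{N}$) of $\mathfrak{gl}(U)\cong\mathfrak{gl}_{n|n}$ acts as zero on $\mathcal{V}_\lambda$: $\rho_*(I_\ell)=0$.
   Context: Let $p,q,N\ge1$, $n=p+q$. Let $U=U_1\oplus U_0$ with $U_1=U_1^+\oplus U_1^-$, $U_0=U_0^+\oplus U_0^-$, $U_\tau^+=\mathbb{C}^p$, $U_\tau^-=\mathbb{C}^q$ ($U_1$ odd, $U_0$ even), and $V=U\otimes\mathbb{C}^N$ with $V_\tau^\pm=U_\tau^\pm\otimes\mathbb{C}^N$. Let $\mathcal{A}_V=\wedge(V_1^+\oplus{V_1^-}^* )\otimes \mathrm{S}(V_0^+\oplus{V_0^-}^* )$ (parity = exterior degree mod 2). Let $\varepsilon,\iota$ denote exterior multiplication and contraction, $\mu,\delta$ symmetric multiplication and derivation. The Clifford–Weyl algebra $\mathfrak{q}(V\oplus V^* )$ (generated by $W=V\oplus V^*$ with $ww'-(-1)^{|w||w'|}w'w=Q(w,w')$, where $Q(v+\varphi,v'+\varphi')=\varphi(v')+\varphi'(v)$ on $V_1\oplus V_1^*$, $=\varphi(v')-\varphi'(v)$ on $V_0\oplus V_0^*$, and the two are orthogonal) acts on $\mathcal{A}_V$ by: $v\in V_1^+\mapsto\varepsilon(v)$, $\varphi\in{V_1^+}^*\mapsto\iota(\varphi)$, $v\in V_1^-\mapsto\iota(v)$, $\varphi\in{V_1^-}^*\mapsto\varepsilon(\varphi)$, $v\in V_0^+\mapsto\mu(v)$, $\varphi\in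 {V_0^+}^*\mapsto\delta(\varphi)$, $v\in V_0^-\mapsto\delta(v)$, $\varphi\in{V_0^-}^*\mapsto-\mu(\varphi)$. Composing with $X\mapsto\sum_i(Xe_i)f^i$ (homogeneous basis $e_i$ of $V$, dual basis $f^i$) gives a representation $R_*$ of $\mathfrak{gl}(V)$ on $\mathcal{A}_V$, and $\rho_*(X):=R_*(X\otimes\mathrm{Id}_N)$ for $X\in\mathfrak{gl}(U)$. $\mathrm{U}_N$ acts on $\mathcal{A}_V$ through its natural action on $V_\tau^+$ (by $\mathrm{Id}\otimes u$) and on ${V_\tau^-}^*$ (contragredient), extended to the exterior and symmetric algebras; $\mathcal{V}_\lambda\subset\mathcal{A}_V$ is the subspace of $\mathrm{U}_N$-invariant vectors, which is preserved by $\rho_*$. $I_\ell$ is the Casimir element of $\mathfrak{gl}_{n|n}$: with a standard basis $E^{\sigma\tau}_{ij}$ ($\sigma,\tau\in\{0,1\}$, $\sigma=1$ for $U_1$, $\sigma=0$ for $U_0$, $E^{\sigma\tau}_{ij}E^{\sigma'\tau'}_{i'j'}=\delta^{\tau\sigma'}\delta_{ji'}E^{\sigma\tau'}_{ij'}$), $I_\ell=\sum E^{\sigma_1\sigma_2}_{j_1j_2}(-1)^{\sigma_2}E^{\sigma_2\sigma_3}_{j_2j_3}(-1)^{\sigma_3}\cdots(-1)^{\sigma_\ell}E^{\sigma_\ell\sigma_1}_{j_\ell j_1}$, and $\rho_*$ is extended to the universal enveloping algebra. *)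

theory Defs
  imports Complex_Main "HOL-Library.Product_Lexorder" "HOL-Library.FuncSet"
begin

text \<open>Generator indices (s, i, k): s = True for the "+" part, s = False for the "-" part;
  i indexes U^+ = C^p (i < p) resp. U^- = C^q (i < q); k < N indexes C^N.
  The same index set labels the odd generators of A_V (basis of V_1^+ resp. (V_1^-)^* )
  and the even generators (basis of V_0^+ resp. (V_0^-)^* ).\<close>

type_synonym gix = "bool \<times> nat \<times> nat"

text \<open>A monomial of A_V: a set S of odd generators (the wedge product of them in
  increasing order) and an exponent function m of the even generators.\<close>

type_synonym mono = "gix set \<times> (gix \<Rightarrow> nat)"
type_synonym fock = "mono \<Rightarrow> complex"

definition valid_ix :: "nat \<Rightarrow> nat \<Rightarrow> nat \<Rightarrow> gix \<Rightarrow> bool" where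
  "valid_ix p q N a = (case a of (s, i, k) \<Rightarrow> k < N \<and> (if s then i < p else i < q))"

definition valid_mono :: "nat \<Rightarrow> nat \<Rightarrow> nat \<Rightarrow> mono \<Rightarrow> bool" where
  "valid_mono p q N M = (case M of (S, m) \<Rightarrow>
      S \<subseteq> {a. valid_ix p q N a} \<and> (\<forall>b. \<not> valid_ix p q N b \<longrightarrow> m b = 0))"

definition A_V :: "nat \<Rightarrow> nat \<Rightarrow> nat \<Rightarrow> fock set" where
  "A_V p q N = {f. finite {M. f M \<noteq> 0} \<and> (\<forall>M. f M \<noteq> 0 \<longrightarrow> valid_mono p q N M)}"

definition vac :: fock where
  "vac = (\<lambda>M. if M = ({}, (\<lambda>_. 0)) then 1 else 0)"

definition ext_sign :: "gix set \<Rightarrow> gix \<Rightarrow> complex" where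
  "ext_sign S a = (-1) ^ card {b \<in> S. b < a}"

definition eps :: "gix \<Rightarrow> fock \<Rightarrow> fock" where
  "eps a f = (\<lambda>(S, m). if a \<in> S then ext_sign S a * f (S - {a}, m) else 0)"

definition iota :: "gix \<Rightarrow> fock \<Rightarrow> fock" where
  "iota a f = (\<lambda>(S, m). if a \<notin> S then ext_sign S a * f (insert a S, m) else 0)"

definition mu :: "gix \<Rightarrow> fock \<Rightarrow> fock" where
  "mu b f = (\<lambda>(S, m). if 0 < m b then f (S, m(b := m b - 1)) else 0)"

definition dlt :: "gix \<Rightarrow> fock \<Rightarrow> fock" where
  "dlt b f = (\<lambda>(S, m). of_nat (m b + 1) * f (S, m(b := m b + 1)))"

text \<open>Clifford--Weyl action of the basis vectors e_{sigma,s,i,k} of V and of the dual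
  basis vectors f^{sigma,s,i,k} of V^*; sigma = 1 for V_1 (odd), sigma = 0 for V_0 (even).\<close>
definition q_e :: "nat \<Rightarrow> bool \<Rightarrow> nat \<Rightarrow> nat \<Rightarrow> fock \<Rightarrow> fock" where
  "q_e \<sigma> s i k f =
     (if \<sigma> = 1 then (if s then eps (s, i, k) f else iota (s, i, k) f)
      else (if s then mu (s, i, k) f else dlt (s, i, k) f))"

definition q_f :: "nat \<Rightarrow> bool \<Rightarrow> nat \<Rightarrow> nat \<Rightarrow> fock \<Rightarrow> fock" where
  "q_f \<sigma> s i k f =
     (if \<sigma> = 1 then (if s then iota (s, i, k) f else eps (s, i, k) f)
      else (if s then dlt (s, i, k) f else (\<lambda>M. - mu (s, i, k) f M)))"

definition uix :: "nat \<Rightarrow> nat \<Rightarrow> bool \<times> nat" where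
  "uix p j = (if j < p then (True, j) else (False, j - p))"

text \<open>rho_*(E^{sigma tau}_{ij}) = R_*(E^{sigma tau}_{ij} (x) Id_N)
   = sum_k q(e_{sigma,i,k}) q(f^{tau,j,k}).\<close>
definition rhoE :: "nat \<Rightarrow> nat \<Rightarrow> nat \<Rightarrow> nat \<Rightarrow> nat \<Rightarrow> nat \<Rightarrow> fock \<Rightarrow> fock" where
  "rhoE p N \<sigma> \<tau> i j f =
     (\<lambda>M. \<Sum>k<N. q_e \<sigma> (fst (uix p i)) (snd (uix p i)) k
                    (q_f \<tau> (fst (uix p j)) (snd (uix p j)) k f) M)"

text \<open>The r-th factor (r < l) of a summand of I_l; c r = (sigma_{r+1}, j_{r+1}).\<close>
definition cas_factor :: "nat \<Rightarrow> nat \<Rightarrow> nat \<Rightarrow> (nat \<Rightarrow> nat \<times> nat) \<Rightarrow> nat \<Rightarrow> fock \<Rightarrow> fock" where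
  "cas_factor p N l c r f =
     (\<lambda>M. (if r = 0 then 1 else (-1) ^ fst (c r)) *
           rhoE p N (fst (c r)) (fst (c ((r + 1) mod l))) (snd (c r)) (snd (c ((r + 1) mod l))) f M)"

definition casimir_op :: "nat \<Rightarrow> nat \<Rightarrow> nat \<Rightarrow> nat \<Rightarrow> fock \<Rightarrow> fock" where
  "casimir_op p q N l f =
     (\<lambda>M. \<Sum>c \<in> Pi\<^sub>E {..<l} (\<lambda>_. {0, 1} \<times> {..<p + q}).
            foldr (\<circ>) (map (cas_factor p N l c) [0..<l]) id f M)"

definition unitary_mat :: "nat \<Rightarrow> (nat \<Rightarrow> nat \<Rightarrow> complex) \<Rightarrow> bool" where
  "unitary_mat N u = (\<forall>i<N. \<forall>j<N. (\<Sum>k<N. cnj (u k i) * u k j) = (if i = j then 1 else 0))"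

text \<open>Coefficient of the generator (s,i,k') in the image of generator (s,i,k) under u:
  natural action on V^+ (by Id (x) u), contragredient action on (V^-)^*.\<close>
definition ucoef :: "(nat \<Rightarrow> nat \<Rightarrow> complex) \<Rightarrow> bool \<Rightarrow> nat \<Rightarrow> nat \<Rightarrow> complex" where
  "ucoef u s k' k = (if s then u k' k else cnj (u k' k))"

definition eps_u :: "nat \<Rightarrow> (nat \<Rightarrow> nat \<Rightarrow> complex) \<Rightarrow> gix \<Rightarrow> fock \<Rightarrow> fock" where
  "eps_u N u a f = (case a of (s, i, k) \<Rightarrow>
      (\<lambda>M. \<Sum>k'<N. ucoef u s k' k * eps (s, i, k') f M))"

definition mu_u :: "nat \<Rightarrow> (nat \<Rightarrow> nat \<Rightarrow> complex) \<Rightarrow> gix \<Rightarrow> fock \<Rightarrow> fock" where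
  "mu_u N u b f = (case b of (s, i, k) \<Rightarrow>
      (\<lambda>M. \<Sum>k'<N. ucoef u s k' k * mu (s, i, k') f M))"

definition act_mono :: "nat \<Rightarrow> nat \<Rightarrow> nat \<Rightarrow> (nat \<Rightarrow> nat \<Rightarrow> complex) \<Rightarrow> mono \<Rightarrow> fock" where
  "act_mono p q N u M = (case M of (S, m) \<Rightarrow>
      foldr (\<lambda>a g. eps_u N u a \<circ> g) (sorted_list_of_set S)
        (foldr (\<lambda>b g. (mu_u N u b ^^ m b) \<circ> g)
           (sorted_list_of_set {b. valid_ix p q N b \<and> 0 < m b}) id) vac)"

definition UN_act :: "nat \<Rightarrow> nat \<Rightarrow> nat \<Rightarrow> (nat \<Rightarrow> nat \<Rightarrow> complex) \<Rightarrow> fock \<Rightarrow> fock" where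
  "UN_act p q N u f = (\<lambda>M. \<Sum>M0 \<in> {M0. f M0 \<noteq> 0}. f M0 * act_mono p q N u M0 M)"

definition V_lambda :: "nat \<Rightarrow> nat \<Rightarrow> nat \<Rightarrow> fock set" where
  "V_lambda p q N = {f \<in> A_V p q N. \<forall>u. unitary_mat N u \<longrightarrow> UN_act p q N u f = f}"

end

theory Submission
  imports Defs "HOL-Analysis.Derivative"
begin


definition good :: "fock \<Rightarrow> bool" where
  "good g \<longleftrightarrow> (\<forall>S m. infinite S \<longrightarrow> g (S, m) = 0)"

lemma eps_ap: "eps a g (S, m) = (if a \<in> S then ext_sign S a * g (S - {a}, m) else 0)"
  by (simp add: eps_def)
lemma iota_ap: "iota a g (S, m) = (if a \<notin> S then ext_sign S a * g (insert a S, m) else 0)"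
  by (simp add: iota_def)
lemma mu_ap: "mu b g (S, m) = (if 0 < m b then g (S, m(b := m b - 1)) else 0)"
  by (simp add: mu_def)
lemma dlt_ap: "dlt b g (S, m) = of_nat (m b + 1) * g (S, m(b := m b + 1))"
  by (simp add: dlt_def)

lemma es_ins:
  assumes "finite S" "a \<notin> S" "a \<noteq> b"
  shows "ext_sign (insert a S) b = (if a < b then - ext_sign S b else ext_sign S b)"
proof (cases "a < b")
  case True
  have "{c \<in> insert a S. c < b} = insert a {c \<in> S. c < b}" using True by auto
  moreover have "card (insert a {c \<in> S. c < b}) = Suc (card {c \<in> S. c < b})"
    using assms by simp
  ultimately show ?thesis using True by (simp add: ext_sign_def)
next
  case False
  have "{c \<in> insert a S. c < b} = {c \<in> S. c < b}" using False by auto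
  then show ?thesis using False by (simp add: ext_sign_def)
qed

lemma es_rem:
  assumes "finite S" "a \<in> S" "a \<noteq> b"
  shows "ext_sign (S - {a}) b = (if a < b then - ext_sign S b else ext_sign S b)"
proof -
  have "ext_sign (insert a (S - {a})) b = (if a < b then - ext_sign (S - {a}) b else ext_sign (S - {a}) b)"
    using assms by (intro es_ins) auto
  moreover have "insert a (S - {a}) = S" using assms by auto
  ultimately show ?thesis by auto
qed

lemma es_ins_self: "ext_sign (insert a S) a = ext_sign S a"
proof -
  have "{c \<in> insert a S. c < a} = {c \<in> S. c < a}" by auto
  then show ?thesis by (simp add: ext_sign_def)
qed

lemma es_rem_self: "ext_sign (S - {a}) a = ext_sign S a"
proof -
  have "{c \<in> S - {a}. c < a} = {c \<in> S. c < a}" by auto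
  then show ?thesis by (simp add: ext_sign_def)
qed

lemma es_sq: "ext_sign S a * ext_sign S a = 1"
  by (simp add: ext_sign_def power_mult_distrib[symmetric] flip: power_add)

lemma good_eps: "good g \<Longrightarrow> good (eps a g)"
  by (auto simp: good_def eps_ap)
lemma good_iota: "good g \<Longrightarrow> good (iota a g)"
  by (auto simp: good_def iota_ap)
lemma good_mu: "good g \<Longrightarrow> good (mu a g)"
  by (auto simp: good_def mu_ap)
lemma good_dlt: "good g \<Longrightarrow> good (dlt a g)"
  by (auto simp: good_def dlt_ap)

lemma eps_eps:
  assumes "good g"
  shows "eps a (eps b g) (S, m) = - eps b (eps a g) (S, m)"
proof (cases "finite S")
  case False
  then show ?thesis using assms by (auto simp: eps_ap good_def)
next
  case True
  consider "a = b" | "a < b" | "b < a" using less_linear by blast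
  then show ?thesis
  proof cases
    case 1 then show ?thesis by (simp add: eps_ap)
  next
    case 2
    then show ?thesis using True
      by (auto simp: eps_ap es_rem Diff_insert2[symmetric] insert_commute)
  next
    case 3
    then show ?thesis using True
      by (auto simp: eps_ap es_rem) (metis Diff_insert Diff_insert2)
  qed
qed


lemma iota_iota:
  assumes "good g"
  shows "iota a (iota b g) (S, m) = - iota b (iota a g) (S, m)"
proof (cases "finite S")
  case False
  then show ?thesis using assms by (auto simp: iota_ap good_def)
next
  case True
  consider "a = b" | "a < b" | "b < a" using less_linear by blast
  then show ?thesis
  proof cases
    case 1 then show ?thesis by (simp add: iota_ap)
  next
    case 2
    have e: "insert b (insert a S) = insert a (insert b S)" by auto
    show ?thesis using True 2
      by (auto simp: iota_ap es_ins e)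
  next
    case 3
    have e: "insert b (insert a S) = insert a (insert b S)" by auto
    show ?thesis using True 3
      by (auto simp: iota_ap es_ins e)
  qed
qed

lemma iota_eps:
  assumes "good g"
  shows "iota a (eps b g) (S, m) = (if a = b then g (S, m) else 0) - eps b (iota a g) (S, m)"
proof (cases "finite S")
  case False
  then show ?thesis using assms by (auto simp: iota_ap eps_ap good_def)
next
  case True
  consider "a = b" | "a < b" | "b < a" using less_linear by blast
  then show ?thesis
  proof cases
    case 1
    show ?thesis
    proof (cases "a \<in> S")
      case True
      then have "insert a (S - {a}) = S" by auto
      then show ?thesis using 1 True es_sq[of S a] by (simp add: iota_ap eps_ap es_rem_self)
    next
      case False
      then have "insert a S - {a} = S" by auto
      then show ?thesis using 1 False es_sq[of S a] by (simp add: iota_ap eps_ap es_ins_self)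
    qed
  next
    case 2
    then have e: "insert a S - {b} = insert a (S - {b})" by auto
    show ?thesis
    proof (cases "a \<in> S \<or> b \<notin> S")
      case True
      then show ?thesis using 2 by (auto simp: iota_ap eps_ap)
    next
      case False
      have "a \<noteq> b" "\<not> b < a" using 2 by auto
      then show ?thesis using 2 False \<open>finite S\<close> e
        by (simp add: iota_ap eps_ap es_ins es_rem)
    qed
  next
    case 3
    then have e: "insert a S - {b} = insert a (S - {b})" by auto
    show ?thesis
    proof (cases "a \<in> S \<or> b \<notin> S")
      case True
      then show ?thesis using 3 by (auto simp: iota_ap eps_ap)
    next
      case False
      have "a \<noteq> b" "\<not> a < b" using 3 by auto
      then show ?thesis using 3 False \<open>finite S\<close> e
        by (simp add: iota_ap eps_ap es_ins es_rem)
    qed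
  qed
qed

lemma mu_mu: "mu a (mu b g) (S, m) = mu b (mu a g) (S, m)"
  by (cases "a = b") (auto simp: mu_ap fun_upd_twist)

lemma dlt_dlt: "dlt a (dlt b g) (S, m) = dlt b (dlt a g) (S, m)"
  by (cases "a = b") (auto simp: dlt_ap fun_upd_twist)

lemma dlt_mu: "dlt a (mu b g) (S, m) = (if a = b then g (S, m) else 0) + mu b (dlt a g) (S, m)"
proof (cases "a = b")
  case True
  show ?thesis
  proof (cases "m b = 0")
    case True
    then have "m(b := 0) = m" by auto
    then show ?thesis using \<open>a = b\<close> True by (simp add: mu_ap dlt_ap)
  next
    case False
    then have "m(b := m b - 1 + 1) = m" by auto
    then show ?thesis using \<open>a = b\<close> False by (simp add: mu_ap dlt_ap algebra_simps of_nat_diff)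
  qed
next
  case False
  then show ?thesis by (auto simp: mu_ap dlt_ap fun_upd_twist)
qed

lemma eps_mu: "eps a (mu b g) (S, m) = mu b (eps a g) (S, m)"
  by (auto simp: mu_ap eps_ap)
lemma eps_dlt: "eps a (dlt b g) (S, m) = dlt b (eps a g) (S, m)"
  by (auto simp: dlt_ap eps_ap)
lemma iota_mu: "iota a (mu b g) (S, m) = mu b (iota a g) (S, m)"
  by (auto simp: mu_ap iota_ap)
lemma iota_dlt: "iota a (dlt b g) (S, m) = dlt b (iota a g) (S, m)"
  by (auto simp: dlt_ap iota_ap)


definition lin :: "(fock \<Rightarrow> fock) \<Rightarrow> bool" where
  "lin L \<longleftrightarrow> (\<forall>g h. L (\<lambda>M. g M + h M) = (\<lambda>M. L g M + L h M)) \<and>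
     (\<forall>c g. L (\<lambda>M. c * g M) = (\<lambda>M. c * L g M))"

lemma lin_eps: "lin (eps a)"
  unfolding lin_def by (auto intro!: ext simp: eps_def algebra_simps split: prod.splits)
lemma lin_iota: "lin (iota a)"
  unfolding lin_def by (auto intro!: ext simp: iota_def algebra_simps split: prod.splits)
lemma lin_mu: "lin (mu a)"
  unfolding lin_def by (auto intro!: ext simp: mu_def algebra_simps split: prod.splits)
lemma lin_dlt: "lin (dlt a)"
  unfolding lin_def by (auto intro!: ext simp: dlt_def algebra_simps split: prod.splits)

lemma lin_add: "lin L \<Longrightarrow> L (\<lambda>M. g M + h M) M = L g M + L h M"
  unfolding lin_def by metis
lemma lin_scale: "lin L \<Longrightarrow> L (\<lambda>M. c * g M) M = c * L g M"
  unfolding lin_def by metis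
lemma lin_zero: "lin L \<Longrightarrow> L (\<lambda>M. 0) M = 0"
  using lin_scale[of L 0 "\<lambda>M. 0" M] by simp
lemma lin_neg: "lin L \<Longrightarrow> L (\<lambda>M. - g M) M = - L g M"
  using lin_scale[of L "-1" g M] by simp
lemma lin_diff: "lin L \<Longrightarrow> L (\<lambda>M. g M - h M) M = L g M - L h M"
  using lin_add[of L g "\<lambda>M. - h M" M] lin_neg[of L h M] by simp
lemma lin_sum: assumes "lin L" "finite I" shows "L (\<lambda>M. \<Sum>i\<in>I. G i M) M = (\<Sum>i\<in>I. L (G i) M)"
  using assms(2)
proof (induction I arbitrary: M rule: finite_induct)
  case empty then show ?case using lin_zero[OF assms(1)] by simp
next
  case (insert x F)
  have "L (\<lambda>M. \<Sum>i\<in>insert x F. G i M) = L (\<lambda>M. G x M + (\<Sum>i\<in>F. G i M))"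
    using insert by simp
  then show ?case using insert lin_add[OF assms(1), of "G x" "\<lambda>M. \<Sum>i\<in>F. G i M" M] by simp
qed
lemma lin_comp: "lin L1 \<Longrightarrow> lin L2 \<Longrightarrow> lin (L1 \<circ> L2)"
  unfolding lin_def by simp
lemma lin_id: "lin id" unfolding lin_def by simp

definition gop :: "nat \<Rightarrow> bool \<Rightarrow> gix \<Rightarrow> fock \<Rightarrow> fock" where
  "gop \<sigma> c a = (if \<sigma> = 1 then (if c then eps a else iota a) else (if c then mu a else dlt a))"

lemma lin_gop: "lin (gop \<sigma> c a)"
  by (simp add: gop_def lin_eps lin_iota lin_mu lin_dlt)

lemma good_gop: "good g \<Longrightarrow> good (gop \<sigma> c a g)"
  by (simp add: gop_def good_eps good_iota good_mu good_dlt)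

lemma gop_rel:
  assumes g: "good g" and s: "\<sigma> \<in> {0, 1}" "\<tau> \<in> {0, 1}"
  shows "gop \<sigma> c a (gop \<tau> d b g) M = (-1) ^ (\<sigma> * \<tau>) * gop \<tau> d b (gop \<sigma> c a g) M +
    (if \<sigma> = \<tau> \<and> a = b \<and> c \<noteq> d then (if \<sigma> = 1 then 1 else if c then -1 else 1) * g M else 0)"
proof -
  obtain S m where M: "M = (S, m)" by (cases M)
  have f1: "eps a (eps b g) (S, m) = - eps b (eps a g) (S, m)" by (rule eps_eps[OF g])
  have f2: "iota a (iota b g) (S, m) = - iota b (iota a g) (S, m)" by (rule iota_iota[OF g])
  have f3: "iota a (eps b g) (S, m) = (if a = b then g (S, m) else 0) - eps b (iota a g) (S, m)" by (rule iota_eps[OF g])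
  have f4: "iota b (eps a g) (S, m) = (if b = a then g (S, m) else 0) - eps a (iota b g) (S, m)" by (rule iota_eps[OF g])
  have f5: "mu a (mu b g) (S, m) = mu b (mu a g) (S, m)" by (rule mu_mu)
  have f6: "dlt a (dlt b g) (S, m) = dlt b (dlt a g) (S, m)" by (rule dlt_dlt)
  have f7: "dlt a (mu b g) (S, m) = (if a = b then g (S, m) else 0) + mu b (dlt a g) (S, m)" by (rule dlt_mu)
  have f8: "dlt b (mu a g) (S, m) = (if b = a then g (S, m) else 0) + mu a (dlt b g) (S, m)" by (rule dlt_mu)
  have f9: "eps a (mu b g) (S, m) = mu b (eps a g) (S, m)" "eps a (dlt b g) (S, m) = dlt b (eps a g) (S, m)"
    "iota a (mu b g) (S, m) = mu b (iota a g) (S, m)" "iota a (dlt b g) (S, m) = dlt b (iota a g) (S, m)"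
    "eps b (mu a g) (S, m) = mu a (eps b g) (S, m)" "eps b (dlt a g) (S, m) = dlt a (eps b g) (S, m)"
    "iota b (mu a g) (S, m) = mu a (iota b g) (S, m)" "iota b (dlt a g) (S, m) = dlt a (iota b g) (S, m)"
    by (rule eps_mu eps_dlt iota_mu iota_dlt)+
  consider "\<sigma> = 0" "\<tau> = 0" | "\<sigma> = 0" "\<tau> = 1" | "\<sigma> = 1" "\<tau> = 0" | "\<sigma> = 1" "\<tau> = 1"
    using s by auto
  then show ?thesis
  proof cases
    case 1 then show ?thesis using f5 f6 f7 f8 unfolding M by (cases c; cases d) (auto simp: gop_def)
  next
    case 2 then show ?thesis using f9 unfolding M by (cases c; cases d) (auto simp: gop_def)
  next
    case 3 then show ?thesis using f9 unfolding M by (cases c; cases d) (auto simp: gop_def)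
  next
    case 4 then show ?thesis using f1 f2 f3 f4 unfolding M by (cases c; cases d) (auto simp: gop_def)
  qed
qed



definition Aop :: "nat \<Rightarrow> nat \<times> nat \<Rightarrow> nat \<Rightarrow> fock \<Rightarrow> fock" where
  "Aop p x k = q_e (fst x) (fst (uix p (snd x))) (snd (uix p (snd x))) k"
definition Bop :: "nat \<Rightarrow> nat \<times> nat \<Rightarrow> nat \<Rightarrow> fock \<Rightarrow> fock" where
  "Bop p x k = q_f (fst x) (fst (uix p (snd x))) (snd (uix p (snd x))) k"

definition Jset :: "nat \<Rightarrow> (nat \<times> nat) set" where
  "Jset n = {0, 1} \<times> {..<n}"

lemma qe_gop: "q_e \<sigma> s i k = gop \<sigma> s (s, i, k)"
  by (simp add: q_e_def gop_def fun_eq_iff)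
lemma qf_gop: "q_f \<sigma> s i k g = (\<lambda>M. (if \<sigma> \<noteq> 1 \<and> \<not> s then -1 else 1) * gop \<sigma> (\<not> s) (s, i, k) g M)"
  by (auto simp: q_f_def gop_def fun_eq_iff)

lemma uix_inj: "uix p j = uix p j' \<Longrightarrow> j = j'"
  by (auto simp: uix_def split: if_splits)

lemma Aop_gop: "Aop p x k = gop (fst x) (fst (uix p (snd x))) (fst (uix p (snd x)), snd (uix p (snd x)), k)"
  by (simp add: Aop_def qe_gop)
lemma Bop_gop: "Bop p x k g = (\<lambda>M. (if fst x \<noteq> 1 \<and> \<not> fst (uix p (snd x)) then -1 else 1) *
    gop (fst x) (\<not> fst (uix p (snd x))) (fst (uix p (snd x)), snd (uix p (snd x)), k) g M)"
  by (simp add: Bop_def qf_gop)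

lemma lin_Aop: "lin (Aop p x k)"
  by (simp add: Aop_gop lin_gop)
lemma lin_Bop: "lin (Bop p x k)"
proof -
  have "Bop p x k = (\<lambda>g M. (if fst x \<noteq> 1 \<and> \<not> fst (uix p (snd x)) then -1 else 1) *
    gop (fst x) (\<not> fst (uix p (snd x))) (fst (uix p (snd x)), snd (uix p (snd x)), k) g M)"
    by (simp add: fun_eq_iff Bop_gop)
  then show ?thesis using lin_gop unfolding lin_def by (auto simp: algebra_simps)
qed
lemma good_Aop: "good g \<Longrightarrow> good (Aop p x k g)"
  by (simp add: Aop_gop good_gop)
lemma good_Bop: "good g \<Longrightarrow> good (Bop p x k g)"
  using good_gop unfolding Bop_gop good_def by auto

lemma sgn_sq: "((-1::complex) ^ n) * (-1) ^ n = 1"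
  by (simp flip: power_add)

lemma BA_rel:
  assumes g: "good g" and x: "fst x \<in> {0, 1}" and y: "fst y \<in> {0, 1}"
  shows "Bop p y k' (Aop p x k g) M = (-1) ^ (fst x * fst y) * Aop p x k (Bop p y k' g) M +
     (if x = y \<and> k = k' then g M else 0)"
proof -
  define sy where "sy = fst (uix p (snd y))"
  define sx where "sx = fst (uix p (snd x))"
  define a where "a = (sx, snd (uix p (snd x)), k)"
  define b where "b = (sy, snd (uix p (snd y)), k')"
  define cy :: complex where "cy = (if fst y \<noteq> 1 \<and> \<not> sy then -1 else 1)"
  have A: "Aop p x k = gop (fst x) sx a" by (simp add: Aop_gop sx_def a_def)
  have B: "\<And>h. Bop p y k' h = (\<lambda>M. cy * gop (fst y) (\<not> sy) b h M)"
    by (simp add: Bop_gop sy_def b_def cy_def)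
  have r: "gop (fst y) (\<not> sy) b (gop (fst x) sx a g) M = (-1) ^ (fst y * fst x) * gop (fst x) sx a (gop (fst y) (\<not> sy) b g) M +
    (if fst y = fst x \<and> b = a \<and> (\<not> sy) \<noteq> sx then (if fst y = 1 then 1 else if \<not> sy then -1 else 1) * g M else 0)"
    by (rule gop_rel[OF g y x])
  have ab: "(b = a) \<longleftrightarrow> (snd x = snd y \<and> k = k')"
    using uix_inj[of p "snd x" "snd y"] by (auto simp: a_def b_def sx_def sy_def prod_eq_iff)
  have xy: "(x = y) \<longleftrightarrow> (fst x = fst y \<and> snd x = snd y)" by (auto simp: prod_eq_iff)
  have sxy: "snd x = snd y \<Longrightarrow> sx = sy" by (simp add: sx_def sy_def)
  have "Bop p y k' (Aop p x k g) M = cy * gop (fst y) (\<not> sy) b (gop (fst x) sx a g) M"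
    by (simp add: A B)
  also have "\<dots> = cy * ((-1) ^ (fst x * fst y) * gop (fst x) sx a (gop (fst y) (\<not> sy) b g) M) +
     cy * (if fst y = fst x \<and> b = a \<and> (\<not> sy) \<noteq> sx then (if fst y = 1 then 1 else if \<not> sy then -1 else 1) * g M else 0)"
    unfolding r by (simp only: distrib_left mult.commute[of "fst y" "fst x"])
  also have "cy * ((-1) ^ (fst x * fst y) * gop (fst x) sx a (gop (fst y) (\<not> sy) b g) M) =
      (-1) ^ (fst x * fst y) * Aop p x k (Bop p y k' g) M"
    unfolding A B lin_scale[OF lin_gop] by simp
  also have "cy * (if fst y = fst x \<and> b = a \<and> (\<not> sy) \<noteq> sx then (if fst y = 1 then 1 else if \<not> sy then -1 else 1) * g M else 0)
     = (if x = y \<and> k = k' then g M else 0)"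
  proof (cases "x = y \<and> k = k'")
    case True
    then have "fst y = fst x" "b = a" "sx = sy" using ab sxy by auto
    then show ?thesis using True by (auto simp: cy_def)
  next
    case False
    then have c1: "(fst y = fst x \<and> b = a \<and> (\<not> sy) \<noteq> sx) = False" using ab xy by auto
    have c2: "(x = y \<and> k = k') = False" using False by simp
    show ?thesis by (simp only: c1 c2 if_False mult_zero_right)
  qed
  finally show ?thesis .
qed


lemma BB_rel:
  assumes g: "good g" and x: "fst x \<in> {0, 1}" and y: "fst y \<in> {0, 1}"
  shows "Bop p y k' (Bop p x k g) M = (-1) ^ (fst x * fst y) * Bop p x k (Bop p y k' g) M"
proof -
  define sy where "sy = fst (uix p (snd y))"
  define sx where "sx = fst (uix p (snd x))"
  define a where "a = (sx, snd (uix p (snd x)), k)"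
  define b where "b = (sy, snd (uix p (snd y)), k')"
  define cy :: complex where "cy = (if fst y \<noteq> 1 \<and> \<not> sy then -1 else 1)"
  define cx :: complex where "cx = (if fst x \<noteq> 1 \<and> \<not> sx then -1 else 1)"
  have A: "\<And>h. Bop p x k h = (\<lambda>M. cx * gop (fst x) (\<not> sx) a h M)"
    by (simp add: Bop_gop sx_def a_def cx_def)
  have B: "\<And>h. Bop p y k' h = (\<lambda>M. cy * gop (fst y) (\<not> sy) b h M)"
    by (simp add: Bop_gop sy_def b_def cy_def)
  have r: "gop (fst y) (\<not> sy) b (gop (fst x) (\<not> sx) a g) M = (-1) ^ (fst y * fst x) * gop (fst x) (\<not> sx) a (gop (fst y) (\<not> sy) b g) M +
    (if fst y = fst x \<and> b = a \<and> (\<not> sy) \<noteq> (\<not> sx) then (if fst y = 1 then 1 else if \<not> sy then -1 else 1) * g M else 0)"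
    by (rule gop_rel[OF g y x])
  have c1: "(fst y = fst x \<and> b = a \<and> (\<not> sy) \<noteq> (\<not> sx)) = False" by (auto simp: a_def b_def)
  have "Bop p y k' (Bop p x k g) M = cy * (cx * gop (fst y) (\<not> sy) b (gop (fst x) (\<not> sx) a g) M)"
    by (simp add: A B lin_scale[OF lin_gop])
  also have "\<dots> = (-1) ^ (fst x * fst y) * Bop p x k (Bop p y k' g) M"
    unfolding r c1 A B lin_scale[OF lin_gop] by (simp add: mult.commute[of "fst y" "fst x"] algebra_simps)
  finally show ?thesis .
qed

lemma AA_rel:
  assumes g: "good g" and x: "fst x \<in> {0, 1}" and y: "fst y \<in> {0, 1}"
  shows "Aop p y k' (Aop p x k g) M = (-1) ^ (fst x * fst y) * Aop p x k (Aop p y k' g) M"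
proof -
  define sy where "sy = fst (uix p (snd y))"
  define sx where "sx = fst (uix p (snd x))"
  define a where "a = (sx, snd (uix p (snd x)), k)"
  define b where "b = (sy, snd (uix p (snd y)), k')"
  have A: "Aop p x k = gop (fst x) sx a" by (simp add: Aop_gop sx_def a_def)
  have B: "Aop p y k' = gop (fst y) sy b" by (simp add: Aop_gop sy_def b_def)
  have r: "gop (fst y) sy b (gop (fst x) sx a g) M = (-1) ^ (fst y * fst x) * gop (fst x) sx a (gop (fst y) sy b g) M +
    (if fst y = fst x \<and> b = a \<and> sy \<noteq> sx then (if fst y = 1 then 1 else if sy then -1 else 1) * g M else 0)"
    by (rule gop_rel[OF g y x])
  have c1: "(fst y = fst x \<and> b = a \<and> sy \<noteq> sx) = False" by (auto simp: a_def b_def)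
  show ?thesis unfolding A B r c1 by (simp add: mult.commute[of "fst y" "fst x"])
qed

definition Hop :: "nat \<Rightarrow> nat \<Rightarrow> nat \<Rightarrow> nat \<Rightarrow> fock \<Rightarrow> fock" where
  "Hop p n k k' g = (\<lambda>M. \<Sum>x\<in>Jset n. Aop p x k (Bop p x k' g) M)"

lemma finite_Jset: "finite (Jset n)" by (simp add: Jset_def)
lemma Jset_fst: "x \<in> Jset n \<Longrightarrow> fst x \<in> {0, 1}" by (auto simp: Jset_def)

lemma sum_Jset_sign: "(\<Sum>x\<in>Jset n. (-1) ^ fst x * (c :: complex)) = 0"
proof -
  have "(\<Sum>x\<in>Jset n. (-1) ^ fst x * c) = (\<Sum>s\<in>{0::nat, 1}. \<Sum>j\<in>{..<n}. (-1) ^ s * c)"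
    unfolding Jset_def sum.cartesian_product by (rule sum.cong) auto
  also have "\<dots> = 0" by simp
  finally show ?thesis .
qed


lemma lemmaG:
  assumes g: "good g"
  shows "(\<Sum>x\<in>Jset n. (-1) ^ fst x * Bop p x k' (Aop p x k g) M) = Hop p n k k' g M"
proof -
  have "(\<Sum>x\<in>Jset n. (-1) ^ fst x * Bop p x k' (Aop p x k g) M) =
     (\<Sum>x\<in>Jset n. Aop p x k (Bop p x k' g) M + (-1) ^ fst x * (if k = k' then g M else 0))"
  proof (rule sum.cong[OF refl])
    fix x assume x: "x \<in> Jset n"
    then have f: "fst x \<in> {0, 1}" by (rule Jset_fst)
    have e: "(-1::complex) ^ fst x * (-1) ^ (fst x * fst x) = 1" using f by auto
    show "(-1) ^ fst x * Bop p x k' (Aop p x k g) M = Aop p x k (Bop p x k' g) M + (-1) ^ fst x * (if k = k' then g M else 0)"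
      unfolding BA_rel[OF g f f] using e by (simp add: algebra_simps)
  qed
  also have "\<dots> = Hop p n k k' g M"
    by (simp add: sum.distrib sum_Jset_sign Hop_def)
  finally show ?thesis .
qed


lemma sgn_sq2: "a \<in> {0,1} \<Longrightarrow> b \<in> {0,1} \<Longrightarrow> ((-1::complex) ^ (a * b)) * (-1) ^ (b * a) = 1"
  by auto

lemma lin_sum_fun: "lin L \<Longrightarrow> finite I \<Longrightarrow> L (\<lambda>M. \<Sum>i\<in>I. G i M) = (\<lambda>M. \<Sum>i\<in>I. L (G i) M)"
  using lin_sum by blast

lemma HB_rel:
  assumes g: "good g" and c: "c \<in> Jset n"
  shows "Hop p n k k' (Bop p c j g) M = Bop p c j (Hop p n k k' g) M - (if k = j then Bop p c k' g M else 0)"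
proof -
  have fc: "fst c \<in> {0,1}" using c by (rule Jset_fst)
  have "Hop p n k k' (Bop p c j g) M = (\<Sum>x\<in>Jset n. Bop p c j (Aop p x k (Bop p x k' g)) M -
      (if x = c then (if k = j then Bop p c k' g M else 0) else 0))"
    unfolding Hop_def
  proof (rule sum.cong[OF refl])
    fix x assume x: "x \<in> Jset n"
    have fx: "fst x \<in> {0,1}" using x by (rule Jset_fst)
    define h where "h = Bop p x k' g"
    have gh: "good h" unfolding h_def by (rule good_Bop[OF g])
    have e1: "Bop p x k' (Bop p c j g) = (\<lambda>M. (-1) ^ (fst c * fst x) * Bop p c j h M)"
      unfolding h_def by (rule ext) (rule BB_rel[OF g fc fx])
    have e2: "Bop p c j (Aop p x k h) M = (-1) ^ (fst x * fst c) * Aop p x k (Bop p c j h) M +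
       (if x = c \<and> k = j then h M else 0)"
      by (rule BA_rel[OF gh fx fc])
    have "Aop p x k (Bop p x k' (Bop p c j g)) M = (-1) ^ (fst c * fst x) * Aop p x k (Bop p c j h) M"
      unfolding e1 by (rule lin_scale[OF lin_Aop])
    also have "\<dots> = (-1) ^ (fst c * fst x) * ((-1) ^ (fst x * fst c) * (Bop p c j (Aop p x k h) M - (if x = c \<and> k = j then h M else 0)))"
      unfolding e2 using sgn_sq[of "fst x * fst c"] by (simp add: algebra_simps)
    also have "\<dots> = Bop p c j (Aop p x k h) M - (if x = c \<and> k = j then h M else 0)"
      using sgn_sq2[OF fc fx] by (simp add: mult.assoc[symmetric])
    finally show "Aop p x k (Bop p x k' (Bop p c j g)) M = Bop p c j (Aop p x k (Bop p x k' g)) M -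
      (if x = c then (if k = j then Bop p c k' g M else 0) else 0)"
      by (simp add: h_def)
  qed
  also have "\<dots> = Bop p c j (Hop p n k k' g) M - (if k = j then Bop p c k' g M else 0)"
    unfolding sum_subtractf Hop_def lin_sum[OF lin_Bop finite_Jset] using c
    by (simp add: sum.delta finite_Jset)
  finally show ?thesis .
qed

lemma HA_rel:
  assumes g: "good g" and c: "c \<in> Jset n"
  shows "Hop p n k k' (Aop p c j g) M = Aop p c j (Hop p n k k' g) M + (if k' = j then Aop p c k g M else 0)"
proof -
  have fc: "fst c \<in> {0,1}" using c by (rule Jset_fst)
  have "Hop p n k k' (Aop p c j g) M = (\<Sum>x\<in>Jset n. Aop p c j (Aop p x k (Bop p x k' g)) M +
      (if x = c then (if k' = j then Aop p c k g M else 0) else 0))"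
    unfolding Hop_def
  proof (rule sum.cong[OF refl])
    fix x assume x: "x \<in> Jset n"
    have fx: "fst x \<in> {0,1}" using x by (rule Jset_fst)
    define h where "h = Bop p x k' g"
    have gh: "good h" unfolding h_def by (rule good_Bop[OF g])
    have e1: "Bop p x k' (Aop p c j g) = (\<lambda>M. (-1) ^ (fst c * fst x) * Aop p c j h M + (if c = x \<and> j = k' then g M else 0))"
      unfolding h_def by (rule ext) (rule BA_rel[OF g fc fx])
    have e2: "Aop p x k (Aop p c j h) M = (-1) ^ (fst c * fst x) * Aop p c j (Aop p x k h) M"
      by (rule AA_rel[OF gh fc fx])
    have "Aop p x k (Bop p x k' (Aop p c j g)) M = (-1) ^ (fst c * fst x) * Aop p x k (Aop p c j h) M +
        (if c = x \<and> j = k' then Aop p x k g M else 0)"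
      unfolding e1 lin_add[OF lin_Aop] lin_scale[OF lin_Aop] by (auto simp: lin_zero[OF lin_Aop])
    also have "\<dots> = Aop p c j (Aop p x k h) M + (if c = x \<and> j = k' then Aop p x k g M else 0)"
      unfolding e2 using sgn_sq2[OF fc fx] by (simp add: mult.assoc[symmetric])
    finally show "Aop p x k (Bop p x k' (Aop p c j g)) M = Aop p c j (Aop p x k (Bop p x k' g)) M +
      (if x = c then (if k' = j then Aop p c k g M else 0) else 0)"
      by (auto simp: h_def)
  qed
  also have "\<dots> = Aop p c j (Hop p n k k' g) M + (if k' = j then Aop p c k g M else 0)"
    unfolding sum.distrib Hop_def lin_sum[OF lin_Aop finite_Jset] using c
    by (simp add: sum.delta finite_Jset)
  finally show ?thesis .
qed



lemma rhoE_AB: "rhoE p N \<sigma> \<tau> i j g = (\<lambda>M. \<Sum>k<N. Aop p (\<sigma>, i) k (Bop p (\<tau>, j) k g) M)"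
  by (simp add: rhoE_def Aop_def Bop_def)

lemma lin_fun_add: "lin L \<Longrightarrow> L (\<lambda>M. g M + h M) = (\<lambda>M. L g M + L h M)"
  unfolding lin_def by blast
lemma lin_fun_scale: "lin L \<Longrightarrow> L (\<lambda>M. c * g M) = (\<lambda>M. c * L g M)"
  unfolding lin_def by blast

lemma lin_rhoE: "lin (rhoE p N \<sigma> \<tau> i j)"
  unfolding lin_def rhoE_AB
  by (simp add: lin_fun_add[OF lin_Bop] lin_fun_add[OF lin_Aop] lin_fun_scale[OF lin_Bop]
      lin_fun_scale[OF lin_Aop] sum.distrib sum_distrib_left)

lemma lin_cas_factor: "lin (cas_factor p N l c r)"
proof -
  have "cas_factor p N l c r = (\<lambda>g M. (if r = 0 then 1 else (-1) ^ fst (c r)) *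
     rhoE p N (fst (c r)) (fst (c ((r + 1) mod l))) (snd (c r)) (snd (c ((r + 1) mod l))) g M)"
    by (simp add: cas_factor_def fun_eq_iff)
  then show ?thesis using lin_rhoE unfolding lin_def by (simp add: algebra_simps)
qed

lemma lin_foldr: "(\<forall>x\<in>set xs. lin (F x)) \<Longrightarrow> lin (foldr (\<circ>) (map F xs) id)"
  by (induction xs) (auto simp: lin_id lin_comp)

lemma foldr_comp_append: "foldr (\<circ>) (map F (xs @ ys)) id = foldr (\<circ>) (map F xs) id \<circ> foldr (\<circ>) (map F ys) id"
  by (induction xs) auto

lemma sum_PiE_insert:
  assumes "x \<notin> S"
  shows "(\<Sum>c\<in>Pi\<^sub>E (insert x S) T. F c) = (\<Sum>y\<in>T x. \<Sum>g\<in>Pi\<^sub>E S T. F (g(x := y)))"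
proof -
  have "(\<Sum>c\<in>Pi\<^sub>E (insert x S) T. F c) = (\<Sum>c\<in>(\<lambda>(y, g). g(x := y)) ` (T x \<times> Pi\<^sub>E S T). F c)"
    by (simp add: PiE_insert_eq)
  also have "\<dots> = (\<Sum>z\<in>T x \<times> Pi\<^sub>E S T. F ((\<lambda>(y, g). g(x := y)) z))"
    by (rule sum.reindex_cong[OF inj_combinator[OF assms] refl]) simp
  also have "\<dots> = (\<Sum>y\<in>T x. \<Sum>g\<in>Pi\<^sub>E S T. F (g(x := y)))"
    by (simp add: sum.cartesian_product split_beta)
  finally show ?thesis .
qed

definition Hzero :: "nat \<Rightarrow> nat \<Rightarrow> nat \<Rightarrow> fock \<Rightarrow> bool" where
  "Hzero p n N f \<longleftrightarrow> (\<forall>k<N. \<forall>k'<N. \<forall>M. Hop p n k k' f M = 0)"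

lemma lemmaR:
  assumes f: "good f" and H: "Hzero p n N f" and c: "c \<in> Jset n"
  shows "(\<Sum>x\<in>Jset n. (-1) ^ fst x * rhoE p N (fst b) (fst x) (snd b) (snd x)
            (rhoE p N (fst x) (fst c) (snd x) (snd c) f) M)
         = - of_nat N * rhoE p N (fst b) (fst c) (snd b) (snd c) f M"
proof -
  define Y where "Y k' = (\<lambda>M. \<Sum>x\<in>Jset n. (-1) ^ fst x * Bop p x k' (rhoE p N (fst x) (fst c) (snd x) (snd c) f) M)" for k'
  have Y: "Y k' = (\<lambda>M. - of_nat N * Bop p c k' f M)" if k': "k' < N" for k'
  proof (rule ext)
    fix M
    have "Y k' M = (\<Sum>x\<in>Jset n. (-1) ^ fst x * (\<Sum>k<N. Bop p x k' (Aop p x k (Bop p c k f)) M))"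
      unfolding Y_def rhoE_AB by (simp add: lin_sum[OF lin_Bop])
    also have "\<dots> = (\<Sum>k<N. \<Sum>x\<in>Jset n. (-1) ^ fst x * Bop p x k' (Aop p x k (Bop p c k f)) M)"
      by (simp add: sum_distrib_left sum.swap[of _ "Jset n"])
    also have "\<dots> = (\<Sum>k<N. Hop p n k k' (Bop p c k f) M)"
      by (simp add: lemmaG[OF good_Bop[OF f]])
    also have "\<dots> = (\<Sum>k<N. - Bop p c k' f M)"
    proof (rule sum.cong[OF refl])
      fix k assume "k \<in> {..<N}"
      then have "Hop p n k k' f = (\<lambda>M. 0)" using H k' by (auto simp: Hzero_def)
      then show "Hop p n k k' (Bop p c k f) M = - Bop p c k' f M"
        unfolding HB_rel[OF f c] by (simp add: lin_zero[OF lin_Bop])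
    qed
    also have "\<dots> = - of_nat N * Bop p c k' f M" by simp
    finally show "Y k' M = - of_nat N * Bop p c k' f M" .
  qed
  have "(\<Sum>x\<in>Jset n. (-1) ^ fst x * rhoE p N (fst b) (fst x) (snd b) (snd x)
            (rhoE p N (fst x) (fst c) (snd x) (snd c) f) M)
     = (\<Sum>x\<in>Jset n. \<Sum>k'<N. (-1) ^ fst x * Aop p b k' (Bop p x k' (rhoE p N (fst x) (fst c) (snd x) (snd c) f)) M)"
    by (simp add: rhoE_AB[of p N "fst b"] sum_distrib_left)
  also have "\<dots> = (\<Sum>k'<N. Aop p b k' (Y k') M)"
    unfolding Y_def lin_sum[OF lin_Aop finite_Jset] lin_scale[OF lin_Aop]
    by (rule sum.swap)
  also have "\<dots> = (\<Sum>k'<N. - of_nat N * Aop p b k' (Bop p c k' f) M)"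
    by (rule sum.cong[OF refl]) (simp add: Y lin_neg[OF lin_Aop] lin_scale[OF lin_Aop])
  also have "\<dots> = - of_nat N * rhoE p N (fst b) (fst c) (snd b) (snd c) f M"
    by (simp add: rhoE_AB sum_distrib_left)
  finally show ?thesis .
qed


lemma Jset_pq: "{0, 1} \<times> {..<p + q} = Jset (p + q)" by (simp add: Jset_def)

lemma cas_base:
  assumes f: "good f" and H: "Hzero p (p + q) N f"
  shows "casimir_op p q N (Suc 0) f M = 0"
proof -
  have "casimir_op p q N (Suc 0) f M = (\<Sum>y\<in>Jset (p + q). \<Sum>g\<in>Pi\<^sub>E {} (\<lambda>_. Jset (p + q)).
      foldr (\<circ>) (map (cas_factor p N (Suc 0) (g(0 := y))) [0..<Suc 0]) id f M)"
    unfolding casimir_op_def Jset_pq lessThan_Suc lessThan_0 by (rule sum_PiE_insert) simp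
  also have "\<dots> = (\<Sum>y\<in>Jset (p + q). rhoE p N (fst y) (fst y) (snd y) (snd y) f M)"
    by (simp add: cas_factor_def)
  also have "\<dots> = (\<Sum>k<N. Hop p (p + q) k k f M)"
    unfolding rhoE_AB Hop_def by (simp add: sum.swap[of _ "Jset (p+q)"])
  also have "\<dots> = 0"
  proof (rule sum.neutral, rule ballI)
    fix k assume "k \<in> {..<N}"
    then show "Hop p (p + q) k k f M = 0" using H unfolding Hzero_def by blast
  qed
  finally show ?thesis .
qed

lemma cas_step:
  assumes f: "good f" and H: "Hzero p (p + q) N f"
  shows "casimir_op p q N (Suc (Suc m)) f M = - of_nat N * casimir_op p q N (Suc m) f M"
proof -
  let ?X = "Jset (p + q)"
  let ?T = "\<lambda>l c. foldr (\<circ>) (map (cas_factor p N l c) [0..<l]) id f M"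
  have s1: "casimir_op p q N (Suc (Suc m)) f M = (\<Sum>y\<in>?X. \<Sum>g\<in>Pi\<^sub>E {..<Suc m} (\<lambda>_. ?X). ?T (Suc (Suc m)) (g(Suc m := y)))"
    unfolding casimir_op_def Jset_pq lessThan_Suc[of "Suc m"] by (rule sum_PiE_insert) simp
  have key: "(\<Sum>y\<in>?X. ?T (Suc (Suc m)) (g(Suc m := y))) = - of_nat N * ?T (Suc m) g"
    if g: "g \<in> Pi\<^sub>E {..<Suc m} (\<lambda>_. ?X)" for g
  proof -
    define P where "P = foldr (\<circ>) (map (cas_factor p N (Suc m) g) [0..<m]) id"
    define t :: complex where "t = (if m = 0 then 1 else (-1) ^ fst (g m))"
    have g0: "g 0 \<in> ?X" using g by auto
    have linP: "lin P" unfolding P_def by (rule lin_foldr) (simp add: lin_cas_factor)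
    have Pc: "foldr (\<circ>) (map (cas_factor p N (Suc (Suc m)) (g(Suc m := y))) [0..<m]) id = P" for y
      unfolding P_def
    proof (rule arg_cong[where f = "\<lambda>xs. foldr (\<circ>) xs id"], rule map_cong[OF refl])
      fix r assume "r \<in> set [0..<m]"
      then have r: "r < m" by simp
      then have e: "(r + 1) mod Suc (Suc m) = r + 1" "(r + 1) mod Suc m = r + 1" "r \<noteq> Suc m" "r + 1 \<noteq> Suc m"
        "Suc r mod Suc (Suc m) = Suc r" "Suc r mod Suc m = Suc r" "Suc r \<noteq> Suc m" by auto
      show "cas_factor p N (Suc (Suc m)) (g(Suc m := y)) r = cas_factor p N (Suc m) g r"
        unfolding cas_factor_def using e by (simp del: mod_Suc)
    qed
    have up2: "[0..<Suc (Suc m)] = [0..<m] @ [m, Suc m]" by simp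
    have up1: "[0..<Suc m] = [0..<m] @ [m]" by simp
    have T2: "?T (Suc (Suc m)) (g(Suc m := y)) = P (\<lambda>M. t * rhoE p N (fst (g m)) (fst y) (snd (g m)) (snd y)
        (\<lambda>M. (-1) ^ fst y * rhoE p N (fst y) (fst (g 0)) (snd y) (snd (g 0)) f M) M) M" for y
    proof -
      have "Suc m mod Suc (Suc m) = Suc m" "Suc (Suc m) mod Suc (Suc m) = 0" by auto
      then show ?thesis unfolding up2 foldr_comp_append Pc[of y, symmetric]
        by (simp add: cas_factor_def t_def)
    qed
    have T1: "?T (Suc m) g = P (\<lambda>M. t * rhoE p N (fst (g m)) (fst (g 0)) (snd (g m)) (snd (g 0)) f M) M"
      unfolding up1 foldr_comp_append P_def by (simp add: cas_factor_def t_def)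
    have inner: "(\<lambda>M. \<Sum>y\<in>?X. t * rhoE p N (fst (g m)) (fst y) (snd (g m)) (snd y)
        (\<lambda>M. (-1) ^ fst y * rhoE p N (fst y) (fst (g 0)) (snd y) (snd (g 0)) f M) M)
       = (\<lambda>M. - of_nat N * (t * rhoE p N (fst (g m)) (fst (g 0)) (snd (g m)) (snd (g 0)) f M))"
    proof (rule ext)
      fix M
      have "(\<Sum>y\<in>?X. t * rhoE p N (fst (g m)) (fst y) (snd (g m)) (snd y)
        (\<lambda>M. (-1) ^ fst y * rhoE p N (fst y) (fst (g 0)) (snd y) (snd (g 0)) f M) M)
        = t * (\<Sum>y\<in>?X. (-1) ^ fst y * rhoE p N (fst (g m)) (fst y) (snd (g m)) (snd y)
            (rhoE p N (fst y) (fst (g 0)) (snd y) (snd (g 0)) f) M)"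
        by (simp add: lin_scale[OF lin_rhoE] sum_distrib_left)
      also have "\<dots> = t * (- of_nat N * rhoE p N (fst (g m)) (fst (g 0)) (snd (g m)) (snd (g 0)) f M)"
        using lemmaR[OF f H g0, of "g m" M] by simp
      finally show "(\<Sum>y\<in>?X. t * rhoE p N (fst (g m)) (fst y) (snd (g m)) (snd y)
        (\<lambda>M. (-1) ^ fst y * rhoE p N (fst y) (fst (g 0)) (snd y) (snd (g 0)) f M) M)
        = - of_nat N * (t * rhoE p N (fst (g m)) (fst (g 0)) (snd (g m)) (snd (g 0)) f M)"
        by (simp add: algebra_simps)
    qed
    have "(\<Sum>y\<in>?X. ?T (Suc (Suc m)) (g(Suc m := y))) = P (\<lambda>M. \<Sum>y\<in>?X. t * rhoE p N (fst (g m)) (fst y) (snd (g m)) (snd y)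
        (\<lambda>M. (-1) ^ fst y * rhoE p N (fst y) (fst (g 0)) (snd y) (snd (g 0)) f M) M) M"
      unfolding T2 lin_sum[OF linP finite_Jset] by simp
    also have "\<dots> = - of_nat N * ?T (Suc m) g"
      unfolding inner T1 lin_scale[OF linP] by simp
    finally show ?thesis .
  qed
  have "casimir_op p q N (Suc (Suc m)) f M = (\<Sum>g\<in>Pi\<^sub>E {..<Suc m} (\<lambda>_. ?X). \<Sum>y\<in>?X. ?T (Suc (Suc m)) (g(Suc m := y)))"
    unfolding s1 by (rule sum.swap)
  also have "\<dots> = (\<Sum>g\<in>Pi\<^sub>E {..<Suc m} (\<lambda>_. ?X). - of_nat N * ?T (Suc m) g)"
    by (rule sum.cong[OF refl]) (rule key)
  also have "\<dots> = - of_nat N * casimir_op p q N (Suc m) f M"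
    unfolding casimir_op_def Jset_pq by (simp add: sum_distrib_left)
  finally show ?thesis .
qed

lemma cas_zero:
  assumes f: "good f" and H: "Hzero p (p + q) N f" and l: "1 \<le> l"
  shows "casimir_op p q N l f = (\<lambda>_. 0)"
proof -
  obtain m where m: "l = Suc m" using l by (cases l) auto
  have "casimir_op p q N (Suc m) f M = 0" for M
    by (induction m) (simp_all add: cas_base[OF f H] cas_step[OF f H])
  then show ?thesis unfolding m by auto
qed



definition Xop :: "nat \<Rightarrow> nat \<Rightarrow> nat \<Rightarrow> (nat \<Rightarrow> nat \<Rightarrow> complex) \<Rightarrow> fock \<Rightarrow> fock" where
  "Xop p n N X g = (\<lambda>M. \<Sum>k<N. \<Sum>k'<N. X k k' * Hop p n k k' g M)"

lemma lin_Hop: "lin (Hop p n k k')"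
  unfolding lin_def Hop_def
  by (simp add: lin_fun_add[OF lin_Bop] lin_fun_add[OF lin_Aop] lin_fun_scale[OF lin_Bop]
      lin_fun_scale[OF lin_Aop] sum.distrib sum_distrib_left)

lemma lin_Xop: "lin (Xop p n N X)"
  unfolding lin_def Xop_def
  by (simp add: lin_fun_add[OF lin_Hop] lin_fun_scale[OF lin_Hop] sum.distrib sum_distrib_left algebra_simps)

lemma Xop_A:
  assumes g: "good g" and c: "c \<in> Jset n" and j: "j < N"
  shows "Xop p n N X (Aop p c j g) M = Aop p c j (Xop p n N X g) M + (\<Sum>k<N. X k j * Aop p c k g M)"
proof -
  have "Xop p n N X (Aop p c j g) M = (\<Sum>k<N. \<Sum>k'<N. X k k' * Aop p c j (Hop p n k k' g) M
      + X k k' * (if k' = j then Aop p c k g M else 0))"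
    unfolding Xop_def HA_rel[OF g c] by (simp only: distrib_left)
  also have "\<dots> = (\<Sum>k<N. \<Sum>k'<N. X k k' * Aop p c j (Hop p n k k' g) M)
      + (\<Sum>k<N. \<Sum>k'<N. X k k' * (if k' = j then Aop p c k g M else 0))"
    by (simp only: sum.distrib)
  also have "(\<Sum>k<N. \<Sum>k'<N. X k k' * Aop p c j (Hop p n k k' g) M) = Aop p c j (Xop p n N X g) M"
  proof -
    have "Aop p c j (Xop p n N X g) M = (\<Sum>k<N. Aop p c j (\<lambda>M. \<Sum>k'<N. X k k' * Hop p n k k' g M) M)"
      unfolding Xop_def by (rule lin_sum[OF lin_Aop finite_lessThan])
    also have "\<dots> = (\<Sum>k<N. \<Sum>k'<N. Aop p c j (\<lambda>M. X k k' * Hop p n k k' g M) M)"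
      by (rule sum.cong[OF refl]) (rule lin_sum[OF lin_Aop finite_lessThan])
    also have "\<dots> = (\<Sum>k<N. \<Sum>k'<N. X k k' * Aop p c j (Hop p n k k' g) M)"
      by (simp only: lin_scale[OF lin_Aop])
    finally show ?thesis by simp
  qed
  also have "(\<Sum>k<N. \<Sum>k'<N. X k k' * (if k' = j then Aop p c k g M else 0)) = (\<Sum>k<N. X k j * Aop p c k g M)"
  proof (rule sum.cong[OF refl])
    fix k
    have "(\<Sum>k'<N. X k k' * (if k' = j then Aop p c k g M else 0)) = (\<Sum>k'<N. if k' = j then X k k' * Aop p c k g M else 0)"
      by (rule sum.cong) auto
    also have "\<dots> = X k j * Aop p c k g M" using j by (simp add: sum.delta)
    finally show "(\<Sum>k'<N. X k k' * (if k' = j then Aop p c k g M else 0)) = X k j * Aop p c k g M" .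
  qed
  finally show ?thesis .
qed

lemma Xop_B:
  assumes g: "good g" and c: "c \<in> Jset n" and j: "j < N"
  shows "Xop p n N X (Bop p c j g) M = Bop p c j (Xop p n N X g) M - (\<Sum>k'<N. X j k' * Bop p c k' g M)"
proof -
  have "Xop p n N X (Bop p c j g) M = (\<Sum>k<N. \<Sum>k'<N. X k k' * Bop p c j (Hop p n k k' g) M
      - X k k' * (if k = j then Bop p c k' g M else 0))"
    unfolding Xop_def HB_rel[OF g c] by (simp only: right_diff_distrib)
  also have "\<dots> = (\<Sum>k<N. \<Sum>k'<N. X k k' * Bop p c j (Hop p n k k' g) M)
      - (\<Sum>k<N. \<Sum>k'<N. X k k' * (if k = j then Bop p c k' g M else 0))"
    by (simp only: sum_subtractf)
  also have "(\<Sum>k<N. \<Sum>k'<N. X k k' * Bop p c j (Hop p n k k' g) M) = Bop p c j (Xop p n N X g) M"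
  proof -
    have "Bop p c j (Xop p n N X g) M = (\<Sum>k<N. Bop p c j (\<lambda>M. \<Sum>k'<N. X k k' * Hop p n k k' g M) M)"
      unfolding Xop_def by (rule lin_sum[OF lin_Bop finite_lessThan])
    also have "\<dots> = (\<Sum>k<N. \<Sum>k'<N. Bop p c j (\<lambda>M. X k k' * Hop p n k k' g M) M)"
      by (rule sum.cong[OF refl]) (rule lin_sum[OF lin_Bop finite_lessThan])
    also have "\<dots> = (\<Sum>k<N. \<Sum>k'<N. X k k' * Bop p c j (Hop p n k k' g) M)"
      by (simp only: lin_scale[OF lin_Bop])
    finally show ?thesis by simp
  qed
  also have "(\<Sum>k<N. \<Sum>k'<N. X k k' * (if k = j then Bop p c k' g M else 0)) = (\<Sum>k'<N. X j k' * Bop p c k' g M)"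
  proof -
    have "(\<Sum>k<N. \<Sum>k'<N. X k k' * (if k = j then Bop p c k' g M else 0))
       = (\<Sum>k<N. if k = j then (\<Sum>k'<N. X k k' * Bop p c k' g M) else 0)"
      by (rule sum.cong[OF refl]) simp
    also have "\<dots> = (\<Sum>k'<N. X j k' * Bop p c k' g M)" using j by (simp add: sum.delta)
    finally show ?thesis .
  qed
  finally show ?thesis .
qed


lemma uix_lt: "i < p \<Longrightarrow> uix p i = (True, i)" by (simp add: uix_def)
lemma uix_ge: "uix p (p + i) = (False, i)" by (simp add: uix_def)

lemma eps_T: "i < p \<Longrightarrow> eps (True, i, k) = Aop p (1, i) k"
  by (simp add: Aop_def uix_lt q_e_def fun_eq_iff)
lemma eps_F: "eps (False, i, k) = Bop p (1, p + i) k"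
  by (simp add: Bop_def uix_ge q_f_def fun_eq_iff)
lemma mu_T: "i < p \<Longrightarrow> mu (True, i, k) = Aop p (0, i) k"
  by (simp add: Aop_def uix_lt q_e_def fun_eq_iff)
lemma mu_F: "mu (False, i, k) g = (\<lambda>M. - Bop p (0, p + i) k g M)"
  by (simp add: Bop_def uix_ge q_f_def fun_eq_iff)

definition skewH :: "nat \<Rightarrow> (nat \<Rightarrow> nat \<Rightarrow> complex) \<Rightarrow> bool" where
  "skewH N X \<longleftrightarrow> (\<forall>a<N. \<forall>b<N. cnj (X a b) = - X b a)"

lemma Xop_eps:
  assumes g: "good g" and v: "valid_ix p q N (s, i, k)" and X: "skewH N X"
  shows "Xop p (p + q) N X (eps (s, i, k) g) M = eps (s, i, k) (Xop p (p + q) N X g) M + eps_u N X (s, i, k) g M"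
proof (cases s)
  case True
  then have i: "i < p" and k: "k < N" using v by (auto simp: valid_ix_def)
  have c: "(1, i) \<in> Jset (p + q)" using i by (simp add: Jset_def)
  have e: "eps_u N X (s, i, k) g M = (\<Sum>k'<N. X k' k * Aop p (1, i) k' g M)"
    using True i by (simp add: eps_u_def ucoef_def eps_T)
  show ?thesis unfolding e using True Xop_A[OF g c k] i by (simp add: eps_T)
next
  case False
  then have i: "i < q" and k: "k < N" using v by (auto simp: valid_ix_def)
  have c: "(1, p + i) \<in> Jset (p + q)" using i by (simp add: Jset_def)
  have e: "eps_u N X (s, i, k) g M = - (\<Sum>k'<N. X k k' * Bop p (1, p + i) k' g M)"
    using False X k by (simp add: eps_u_def ucoef_def eps_F skewH_def sum_negf[symmetric] eps_F[where p=p])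
  show ?thesis unfolding e using False Xop_B[OF g c k] by (simp add: eps_F[where p=p])
qed

lemma Xop_mu:
  assumes g: "good g" and v: "valid_ix p q N (s, i, k)" and X: "skewH N X"
  shows "Xop p (p + q) N X (mu (s, i, k) g) M = mu (s, i, k) (Xop p (p + q) N X g) M + mu_u N X (s, i, k) g M"
proof (cases s)
  case True
  then have i: "i < p" and k: "k < N" using v by (auto simp: valid_ix_def)
  have c: "(0, i) \<in> Jset (p + q)" using i by (simp add: Jset_def)
  have e: "mu_u N X (s, i, k) g M = (\<Sum>k'<N. X k' k * Aop p (0, i) k' g M)"
    using True i by (simp add: mu_u_def ucoef_def mu_T)
  show ?thesis unfolding e using True Xop_A[OF g c k] i by (simp add: mu_T)
next
  case False
  then have i: "i < q" and k: "k < N" using v by (auto simp: valid_ix_def)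
  have c: "(0, p + i) \<in> Jset (p + q)" using i by (simp add: Jset_def)
  have e: "mu_u N X (s, i, k) g M = (\<Sum>k'<N. X k k' * Bop p (0, p + i) k' g M)"
    using False X k by (simp add: mu_u_def ucoef_def mu_F[where p=p] skewH_def)
  have "Xop p (p + q) N X (mu (s, i, k) g) M = - Xop p (p + q) N X (Bop p (0, p + i) k g) M"
    using False by (simp add: mu_F[where p=p] lin_neg[OF lin_Xop])
  also have "\<dots> = - Bop p (0, p + i) k (Xop p (p + q) N X g) M + (\<Sum>k'<N. X k k' * Bop p (0, p + i) k' g M)"
    unfolding Xop_B[OF g c k] by simp
  finally show ?thesis unfolding e using False by (simp add: mu_F[where p=p])
qed



definition pwd :: "(real \<Rightarrow> fock) \<Rightarrow> fock \<Rightarrow> bool" where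
  "pwd h hdv \<longleftrightarrow> (\<forall>M. ((\<lambda>t. h t M) has_vector_derivative hdv M) (at 0))"

definition dc :: "(fock \<Rightarrow> fock) \<Rightarrow> (real \<Rightarrow> fock \<Rightarrow> fock) \<Rightarrow> (fock \<Rightarrow> fock) \<Rightarrow> bool" where
  "dc Xo Lt L' \<longleftrightarrow> lin (Lt 0) \<and> (\<forall>g. good g \<longrightarrow> good (Lt 0 g)) \<and>
     (\<forall>g M. good g \<longrightarrow> Xo (Lt 0 g) M = Lt 0 (Xo g) M + L' g M) \<and>
     (\<forall>h hdv. pwd h hdv \<longrightarrow> pwd (\<lambda>t. Lt t (h t)) (\<lambda>M. Lt 0 hdv M + L' (h 0) M))"

lemma dc_id: "dc Xo (\<lambda>t. id) (\<lambda>g M. 0)"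
  by (simp add: dc_def lin_id)

lemma dc_comp:
  assumes 1: "dc Xo L1 L1'" and 2: "dc Xo L2 L2'"
  shows "dc Xo (\<lambda>t. L1 t \<circ> L2 t) (\<lambda>g M. L1 0 (L2' g) M + L1' (L2 0 g) M)"
proof -
  have l1: "lin (L1 0)" and g1: "\<And>g. good g \<Longrightarrow> good (L1 0 g)"
    and c1: "\<And>g M. good g \<Longrightarrow> Xo (L1 0 g) M = L1 0 (Xo g) M + L1' g M"
    and d1: "\<And>h hdv. pwd h hdv \<Longrightarrow> pwd (\<lambda>t. L1 t (h t)) (\<lambda>M. L1 0 hdv M + L1' (h 0) M)"
    using 1 unfolding dc_def by blast+
  have l2: "lin (L2 0)" and g2: "\<And>g. good g \<Longrightarrow> good (L2 0 g)"
    and c2: "\<And>g M. good g \<Longrightarrow> Xo (L2 0 g) M = L2 0 (Xo g) M + L2' g M"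
    and d2: "\<And>h hdv. pwd h hdv \<Longrightarrow> pwd (\<lambda>t. L2 t (h t)) (\<lambda>M. L2 0 hdv M + L2' (h 0) M)"
    using 2 unfolding dc_def by blast+
  have "lin (L1 0 \<circ> L2 0)" using l1 l2 by (rule lin_comp)
  moreover have "\<forall>g. good g \<longrightarrow> good ((L1 0 \<circ> L2 0) g)" using g1 g2 by simp
  moreover have "Xo ((L1 0 \<circ> L2 0) g) M = (L1 0 \<circ> L2 0) (Xo g) M + (L1 0 (L2' g) M + L1' (L2 0 g) M)"
    if g: "good g" for g M
  proof -
    have e: "Xo (L2 0 g) = (\<lambda>M. L2 0 (Xo g) M + L2' g M)" using c2[OF g] by auto
    have "Xo ((L1 0 \<circ> L2 0) g) M = L1 0 (Xo (L2 0 g)) M + L1' (L2 0 g) M"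
      using c1[OF g2[OF g]] by simp
    also have "\<dots> = L1 0 (L2 0 (Xo g)) M + L1 0 (L2' g) M + L1' (L2 0 g) M"
      unfolding e lin_add[OF l1] by simp
    finally show ?thesis by simp
  qed
  moreover have "pwd (\<lambda>t. (L1 t \<circ> L2 t) (h t)) (\<lambda>M. (L1 0 \<circ> L2 0) hdv M + (L1 0 (L2' (h 0)) M + L1' (L2 0 (h 0)) M))"
    if h: "pwd h hdv" for h hdv
  proof -
    have "pwd (\<lambda>t. L1 t (L2 t (h t))) (\<lambda>M. L1 0 (\<lambda>M. L2 0 hdv M + L2' (h 0) M) M + L1' (L2 0 (h 0)) M)"
      using d1[OF d2[OF h]] by simp
    then show ?thesis unfolding lin_add[OF l1] by (simp add: add.assoc)
  qed
  ultimately show ?thesis unfolding dc_def by blast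
qed

definition dcE :: "(fock \<Rightarrow> fock) \<Rightarrow> (real \<Rightarrow> fock \<Rightarrow> fock) \<Rightarrow> bool" where
  "dcE Xo Lt \<longleftrightarrow> (\<exists>L'. dc Xo Lt L')"

lemma dcE_comp: "dcE Xo L1 \<Longrightarrow> dcE Xo L2 \<Longrightarrow> dcE Xo (\<lambda>t. L1 t \<circ> L2 t)"
  unfolding dcE_def using dc_comp by blast

lemma dcE_id: "dcE Xo (\<lambda>t. id)"
  unfolding dcE_def using dc_id by blast

lemma dcE_pow: "dcE Xo L \<Longrightarrow> dcE Xo (\<lambda>t. L t ^^ n)"
proof (induction n)
  case 0 then show ?case using dcE_id[of Xo] by (simp add: id_def)
next
  case (Suc n)
  then have "dcE Xo (\<lambda>t. L t \<circ> L t ^^ n)" by (intro dcE_comp) auto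
  moreover have "(\<lambda>t. L t ^^ Suc n) = (\<lambda>t. L t \<circ> L t ^^ n)" by simp
  ultimately show ?case by metis
qed

lemma dcE_foldr:
  assumes "\<forall>a\<in>set xs. dcE Xo (\<lambda>t. F t a)" and "dcE Xo R"
  shows "dcE Xo (\<lambda>t. foldr (\<lambda>a g. F t a \<circ> g) xs (R t))"
  using assms by (induction xs) (auto intro: dcE_comp)


lemma good_vac: "good vac" by (auto simp: good_def vac_def)

lemma iota_vac: "iota a vac = (\<lambda>_. 0)"
  by (auto simp: fun_eq_iff iota_def vac_def)
lemma dlt_vac: "dlt a vac = (\<lambda>_. 0)"
proof (rule ext)
  fix M :: mono
  obtain S m where M: "M = (S, m)" by (cases M)
  have ne: "m(a := m a + 1) \<noteq> (\<lambda>_. 0)"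
  proof
    assume "m(a := m a + 1) = (\<lambda>_. 0)"
    then have "(m(a := m a + 1)) a = 0" by simp
    then show False by simp
  qed
  show "dlt a vac M = 0" unfolding M dlt_ap using ne by (simp add: vac_def)
qed

lemma sum_Jset_sign2: "(\<Sum>x\<in>Jset n. (-1) ^ fst x * (c (snd x) :: complex)) = 0"
proof -
  have "(\<Sum>x\<in>Jset n. (-1) ^ fst x * c (snd x)) = (\<Sum>s\<in>{0::nat, 1}. \<Sum>j\<in>{..<n}. (-1) ^ s * c j)"
    unfolding Jset_def sum.cartesian_product by (rule sum.cong) auto
  also have "\<dots> = 0" by (simp add: sum_negf)
  finally show ?thesis .
qed

lemma Hop_vac: "Hop p n k k' vac M = 0"
proof -
  define c where "c j = (if j < p then 0 else - (if k = k' then vac M else 0))" for j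
  have "Hop p n k k' vac M = (\<Sum>x\<in>Jset n. (-1) ^ fst x * c (snd x))"
    unfolding Hop_def
  proof (rule sum.cong[OF refl])
    fix x assume x: "x \<in> Jset n"
    have fx: "fst x \<in> {0, 1}" using x by (rule Jset_fst)
    show "Aop p x k (Bop p x k' vac) M = (-1) ^ fst x * c (snd x)"
    proof (cases "snd x < p")
      case True
      then have "Bop p x k' vac = (\<lambda>_. 0)"
        by (auto simp: Bop_def q_f_def uix_def iota_vac dlt_vac)
      then show ?thesis using True by (simp add: c_def lin_zero[OF lin_Aop])
    next
      case False
      then have "Aop p x k vac = (\<lambda>_. 0)"
        by (auto simp: Aop_def q_e_def uix_def iota_vac dlt_vac)
      define T where "T = Aop p x k (Bop p x k' vac) M"
      define d where "d = (if k = k' then vac M else 0)"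
      define sg :: complex where "sg = (-1) ^ fst x"
      have "0 = (-1) ^ (fst x * fst x) * T + d"
        using BA_rel[OF good_vac fx fx, of p k' k M] \<open>Aop p x k vac = (\<lambda>_. 0)\<close>
        by (simp add: lin_zero[OF lin_Bop] T_def d_def)
      moreover have "(-1::complex) ^ (fst x * fst x) = sg" using fx by (auto simp: sg_def)
      ultimately have e: "sg * T = - d" by (simp add: eq_neg_iff_add_eq_0)
      have ss: "sg * sg = 1" unfolding sg_def by (rule sgn_sq)
      have "T = sg * (sg * T)" using ss by (simp add: mult.assoc[symmetric])
      then have "T = sg * c (snd x)" using e False by (simp add: c_def d_def)
      then show ?thesis by (simp add: T_def sg_def)
    qed
  qed
  also have "\<dots> = 0" by (rule sum_Jset_sign2)
  finally show ?thesis .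
qed

lemma Xop_vac: "Xop p n N X vac = (\<lambda>_. 0)"
  by (simp add: Xop_def Hop_vac fun_eq_iff)



lemma pwd_eps: "pwd h hdv \<Longrightarrow> pwd (\<lambda>t. eps b (h t)) (eps b hdv)"
  unfolding pwd_def
proof (intro allI)
  fix M :: mono
  assume h: "\<forall>M. ((\<lambda>t. h t M) has_vector_derivative hdv M) (at 0)"
  obtain S m where M: "M = (S, m)" by (cases M)
  show "((\<lambda>t. eps b (h t) M) has_vector_derivative eps b hdv M) (at 0)"
    unfolding M eps_ap
    by (cases "b \<in> S") (auto intro!: has_vector_derivative_mult_right h[rule_format])
qed

lemma pwd_mu: "pwd h hdv \<Longrightarrow> pwd (\<lambda>t. mu b (h t)) (mu b hdv)"
  unfolding pwd_def
proof (intro allI)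
  fix M :: mono
  assume h: "\<forall>M. ((\<lambda>t. h t M) has_vector_derivative hdv M) (at 0)"
  obtain S m where M: "M = (S, m)" by (cases M)
  show "((\<lambda>t. mu b (h t) M) has_vector_derivative mu b hdv M) (at 0)"
    unfolding M mu_ap
    by (cases "0 < m b") (auto intro!: h[rule_format])
qed

definition fam :: "nat \<Rightarrow> (real \<Rightarrow> nat \<Rightarrow> nat \<Rightarrow> complex) \<Rightarrow> (nat \<Rightarrow> nat \<Rightarrow> complex) \<Rightarrow> bool" where
  "fam N u X \<longleftrightarrow> (\<forall>a b. ((\<lambda>t. u t a b) has_vector_derivative X a b) (at 0)) \<and>
     (\<forall>a<N. \<forall>b<N. u 0 a b = (if a = b then 1 else 0)) \<and> skewH N X"

lemma ucoef_deriv: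
  assumes "\<forall>a b. ((\<lambda>t. u t a b) has_vector_derivative X a b) (at 0)"
  shows "((\<lambda>t. ucoef (u t) s k' k) has_vector_derivative ucoef X s k' k) (at 0)"
  using assms by (cases s) (auto simp: ucoef_def intro!: has_vector_derivative_cnj)

lemma eps_u_id:
  assumes "\<forall>a<N. \<forall>b<N. u a b = (if a = b then 1 else 0)" "k < N"
  shows "eps_u N u (s, i, k) = eps (s, i, k)"
proof (rule ext)+
  fix g M
  have uc: "k' \<in> {..<N} \<Longrightarrow> ucoef u s k' k = (if k' = k then 1 else 0)" for k'
    using assms by (auto simp: ucoef_def)
  have "eps_u N u (s, i, k) g M = (\<Sum>k'<N. ucoef u s k' k * eps (s, i, k') g M)"
    by (simp add: eps_u_def)
  also have "\<dots> = (\<Sum>k'<N. if k' = k then eps (s, i, k') g M else 0)"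
    by (rule sum.cong[OF refl]) (simp add: uc)
  also have "\<dots> = eps (s, i, k) g M" using assms by (simp add: sum.delta)
  finally show "eps_u N u (s, i, k) g M = eps (s, i, k) g M" .
qed

lemma mu_u_id:
  assumes "\<forall>a<N. \<forall>b<N. u a b = (if a = b then 1 else 0)" "k < N"
  shows "mu_u N u (s, i, k) = mu (s, i, k)"
proof (rule ext)+
  fix g M
  have uc: "k' \<in> {..<N} \<Longrightarrow> ucoef u s k' k = (if k' = k then 1 else 0)" for k'
    using assms by (auto simp: ucoef_def)
  have "mu_u N u (s, i, k) g M = (\<Sum>k'<N. ucoef u s k' k * mu (s, i, k') g M)"
    by (simp add: mu_u_def)
  also have "\<dots> = (\<Sum>k'<N. if k' = k then mu (s, i, k') g M else 0)"
    by (rule sum.cong[OF refl]) (simp add: uc)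
  also have "\<dots> = mu (s, i, k) g M" using assms by (simp add: sum.delta)
  finally show "mu_u N u (s, i, k) g M = mu (s, i, k) g M" .
qed

lemma dc_eps_u:
  assumes F: "fam N u X" and v: "valid_ix p q N a"
  shows "dc (Xop p (p + q) N X) (\<lambda>t. eps_u N (u t) a) (eps_u N X a)"
proof -
  obtain s i k where a: "a = (s, i, k)" by (cases a) auto
  have k: "k < N" using v a by (auto simp: valid_ix_def)
  have ud: "\<forall>a b. ((\<lambda>t. u t a b) has_vector_derivative X a b) (at 0)"
    and u0: "\<forall>a<N. \<forall>b<N. u 0 a b = (if a = b then 1 else 0)" and X: "skewH N X"
    using F by (auto simp: fam_def)
  have e0: "eps_u N (u 0) a = eps a" unfolding a by (rule eps_u_id[OF u0 k])
  have "pwd (\<lambda>t. eps_u N (u t) a (h t)) (\<lambda>M. eps_u N (u 0) a hdv M + eps_u N X a (h 0) M)"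
    if h: "pwd h hdv" for h hdv
    unfolding pwd_def
  proof
    fix M
    have d: "((\<lambda>t. eps (s, i, k') (h t) M) has_vector_derivative eps (s, i, k') hdv M) (at 0)" for k'
      using pwd_eps[OF h] unfolding pwd_def by blast
    have "((\<lambda>t. \<Sum>k'<N. ucoef (u t) s k' k * eps (s, i, k') (h t) M) has_vector_derivative
        (\<Sum>k'<N. ucoef (u 0) s k' k * eps (s, i, k') hdv M + ucoef X s k' k * eps (s, i, k') (h 0) M)) (at 0)"
      by (intro has_vector_derivative_sum has_vector_derivative_mult ucoef_deriv[OF ud] d)
    then show "((\<lambda>t. eps_u N (u t) a (h t) M) has_vector_derivative eps_u N (u 0) a hdv M + eps_u N X a (h 0) M) (at 0)"
      unfolding a eps_u_def by (simp add: sum.distrib)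
  qed
  then show ?thesis unfolding dc_def e0
    using lin_eps good_eps Xop_eps[OF _ v[unfolded a] X] a by auto
qed

lemma dc_mu_u:
  assumes F: "fam N u X" and v: "valid_ix p q N a"
  shows "dc (Xop p (p + q) N X) (\<lambda>t. mu_u N (u t) a) (mu_u N X a)"
proof -
  obtain s i k where a: "a = (s, i, k)" by (cases a) auto
  have k: "k < N" using v a by (auto simp: valid_ix_def)
  have ud: "\<forall>a b. ((\<lambda>t. u t a b) has_vector_derivative X a b) (at 0)"
    and u0: "\<forall>a<N. \<forall>b<N. u 0 a b = (if a = b then 1 else 0)" and X: "skewH N X"
    using F by (auto simp: fam_def)
  have e0: "mu_u N (u 0) a = mu a" unfolding a by (rule mu_u_id[OF u0 k])
  have "pwd (\<lambda>t. mu_u N (u t) a (h t)) (\<lambda>M. mu_u N (u 0) a hdv M + mu_u N X a (h 0) M)"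
    if h: "pwd h hdv" for h hdv
    unfolding pwd_def
  proof
    fix M
    have d: "((\<lambda>t. mu (s, i, k') (h t) M) has_vector_derivative mu (s, i, k') hdv M) (at 0)" for k'
      using pwd_mu[OF h] unfolding pwd_def by blast
    have "((\<lambda>t. \<Sum>k'<N. ucoef (u t) s k' k * mu (s, i, k') (h t) M) has_vector_derivative
        (\<Sum>k'<N. ucoef (u 0) s k' k * mu (s, i, k') hdv M + ucoef X s k' k * mu (s, i, k') (h 0) M)) (at 0)"
      by (intro has_vector_derivative_sum has_vector_derivative_mult ucoef_deriv[OF ud] d)
    then show "((\<lambda>t. mu_u N (u t) a (h t) M) has_vector_derivative mu_u N (u 0) a hdv M + mu_u N X a (h 0) M) (at 0)"
      unfolding a mu_u_def by (simp add: sum.distrib)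
  qed
  then show ?thesis unfolding dc_def e0
    using lin_mu good_mu Xop_mu[OF _ v[unfolded a] X] a by auto
qed


lemma finite_valid: "finite {a. valid_ix p q N a}"
proof (rule finite_subset)
  show "{a. valid_ix p q N a} \<subseteq> UNIV \<times> {..<p + q} \<times> {..<N}"
    by (auto simp: valid_ix_def split: if_splits)
qed simp

lemma act_dcE:
  assumes F: "fam N u X" and v: "valid_mono p q N (S, m)"
  shows "dcE (Xop p (p + q) N X) (\<lambda>t. foldr (\<lambda>a g. eps_u N (u t) a \<circ> g) (sorted_list_of_set S)
           (foldr (\<lambda>b g. (mu_u N (u t) b ^^ m b) \<circ> g) (sorted_list_of_set {b. valid_ix p q N b \<and> 0 < m b}) id))"
proof (rule dcE_foldr)
  have Sv: "S \<subseteq> {a. valid_ix p q N a}" using v by (simp add: valid_mono_def)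
  then have fS: "finite S" using finite_valid finite_subset by blast
  show "\<forall>a\<in>set (sorted_list_of_set S). dcE (Xop p (p + q) N X) (\<lambda>t. eps_u N (u t) a)"
  proof
    fix a assume "a \<in> set (sorted_list_of_set S)"
    then have "valid_ix p q N a" using fS Sv by auto
    then show "dcE (Xop p (p + q) N X) (\<lambda>t. eps_u N (u t) a)"
      using dc_eps_u[OF F, of p q a] unfolding dcE_def by blast
  qed
  have fB: "finite {b. valid_ix p q N b \<and> 0 < m b}"
    using finite_valid by (rule finite_subset[rotated]) auto
  show "dcE (Xop p (p + q) N X) (\<lambda>t. foldr (\<lambda>b g. (mu_u N (u t) b ^^ m b) \<circ> g) (sorted_list_of_set {b. valid_ix p q N b \<and> 0 < m b}) id)"
  proof (rule dcE_foldr)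
    show "\<forall>a\<in>set (sorted_list_of_set {b. valid_ix p q N b \<and> 0 < m b}). dcE (Xop p (p + q) N X) (\<lambda>t. mu_u N (u t) a ^^ m a)"
    proof
      fix a assume "a \<in> set (sorted_list_of_set {b. valid_ix p q N b \<and> 0 < m b})"
      then have "valid_ix p q N a" using fB by auto
      then have "dcE (Xop p (p + q) N X) (\<lambda>t. mu_u N (u t) a)"
        using dc_mu_u[OF F, of p q a] unfolding dcE_def by blast
      then show "dcE (Xop p (p + q) N X) (\<lambda>t. mu_u N (u t) a ^^ m a)" by (rule dcE_pow)
    qed
    show "dcE (Xop p (p + q) N X) (\<lambda>t. id)" by (rule dcE_id)
  qed
qed

lemma act_deriv:
  assumes F: "fam N u X" and v: "valid_mono p q N M0"
  shows "((\<lambda>t. act_mono p q N (u t) M0 M) has_vector_derivative Xop p (p + q) N X (act_mono p q N (u 0) M0) M) (at 0)"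
proof -
  obtain S m where M0: "M0 = (S, m)" by (cases M0)
  define ch where "ch t = foldr (\<lambda>a g. eps_u N (u t) a \<circ> g) (sorted_list_of_set S)
           (foldr (\<lambda>b g. (mu_u N (u t) b ^^ m b) \<circ> g) (sorted_list_of_set {b. valid_ix p q N b \<and> 0 < m b}) id)" for t
  have am: "act_mono p q N (u t) M0 = ch t vac" for t by (simp add: M0 act_mono_def ch_def)
  obtain L' where L: "dc (Xop p (p + q) N X) ch L'"
    using act_dcE[OF F v[unfolded M0]] unfolding dcE_def ch_def by blast
  have pv: "pwd (\<lambda>t. vac) (\<lambda>_. 0)" by (simp add: pwd_def)
  have "pwd (\<lambda>t. ch t vac) (\<lambda>M. ch 0 (\<lambda>_. 0) M + L' vac M)"
    using L pv unfolding dc_def by blast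
  then have "((\<lambda>t. ch t vac M) has_vector_derivative ch 0 (\<lambda>_. 0) M + L' vac M) (at 0)"
    unfolding pwd_def by blast
  moreover have "ch 0 (\<lambda>_. 0) M = 0" using L unfolding dc_def by (metis lin_zero)
  moreover have "Xop p (p + q) N X (ch 0 vac) M = ch 0 (Xop p (p + q) N X vac) M + L' vac M"
    using L good_vac unfolding dc_def by blast
  ultimately show ?thesis unfolding am Xop_vac by simp
qed

lemma Xop_zero:
  assumes f: "f \<in> V_lambda p q N" and U: "\<forall>t. unitary_mat N (u t)" and F: "fam N u X"
  shows "Xop p (p + q) N X f M = 0"
proof -
  have fA: "f \<in> A_V p q N" and inv: "\<And>u. unitary_mat N u \<Longrightarrow> UN_act p q N u f = f"
    using f by (auto simp: V_lambda_def)
  define FS where "FS = {M0. f M0 \<noteq> 0}"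
  have fin: "finite FS" and val: "\<And>M0. M0 \<in> FS \<Longrightarrow> valid_mono p q N M0"
    using fA by (auto simp: A_V_def FS_def)
  have "((\<lambda>t. \<Sum>M0\<in>FS. f M0 * act_mono p q N (u t) M0 M) has_vector_derivative
      (\<Sum>M0\<in>FS. f M0 * Xop p (p + q) N X (act_mono p q N (u 0) M0) M)) (at 0)"
    by (intro has_vector_derivative_sum has_vector_derivative_mult_right act_deriv[OF F val])
  moreover have "(\<lambda>t. \<Sum>M0\<in>FS. f M0 * act_mono p q N (u t) M0 M) = (\<lambda>t. f M)"
  proof
    fix t
    have "UN_act p q N (u t) f M = f M" using inv U by simp
    then show "(\<Sum>M0\<in>FS. f M0 * act_mono p q N (u t) M0 M) = f M" by (simp add: UN_act_def FS_def)
  qed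
  moreover have "(\<Sum>M0\<in>FS. f M0 * Xop p (p + q) N X (act_mono p q N (u 0) M0) M) = Xop p (p + q) N X f M"
  proof -
    have "(\<Sum>M0\<in>FS. f M0 * Xop p (p + q) N X (act_mono p q N (u 0) M0) M)
        = Xop p (p + q) N X (\<lambda>M. \<Sum>M0\<in>FS. f M0 * act_mono p q N (u 0) M0 M) M"
      by (simp add: lin_sum[OF lin_Xop fin] lin_scale[OF lin_Xop])
    also have "(\<lambda>M. \<Sum>M0\<in>FS. f M0 * act_mono p q N (u 0) M0 M) = f"
      using inv[OF U[rule_format, of 0]] by (simp add: UN_act_def FS_def)
    finally show ?thesis .
  qed
  ultimately have "((\<lambda>t. f M) has_vector_derivative Xop p (p + q) N X f M) (at 0)" by simp
  moreover have "((\<lambda>t. f M) has_vector_derivative 0) (at 0)" by simp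
  ultimately show ?thesis using vector_derivative_unique_at by blast
qed



definition blk :: "nat set \<Rightarrow> (nat \<Rightarrow> nat \<Rightarrow> complex) \<Rightarrow> nat \<Rightarrow> nat \<Rightarrow> complex" where
  "blk K w = (\<lambda>a b. if a \<in> K \<and> b \<in> K then w a b else if a = b then 1 else 0)"

lemma unitary_blk:
  assumes K: "K \<subseteq> {..<N}" and w: "\<forall>a\<in>K. \<forall>b\<in>K. (\<Sum>r\<in>K. cnj (w r a) * w r b) = (if a = b then 1 else 0)"
  shows "unitary_mat N (blk K w)"
  unfolding unitary_mat_def
proof (intro allI impI)
  fix i j assume i: "i < N" and j: "j < N"
  show "(\<Sum>r<N. cnj (blk K w r i) * blk K w r j) = (if i = j then 1 else 0)"
  proof (cases "i \<in> K")
    case False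
    have "(\<Sum>r<N. cnj (blk K w r i) * blk K w r j) = (\<Sum>r<N. if r = i then blk K w i j else 0)"
      by (rule sum.cong[OF refl]) (use False in \<open>auto simp: blk_def\<close>)
    also have "\<dots> = blk K w i j" using i by (simp add: sum.delta)
    also have "\<dots> = (if i = j then 1 else 0)" using False by (simp add: blk_def)
    finally show ?thesis .
  next
    case iK: True
    show ?thesis
    proof (cases "j \<in> K")
      case False
      have "(\<Sum>r<N. cnj (blk K w r i) * blk K w r j) = (\<Sum>r<N. if r = j then cnj (blk K w j i) else 0)"
        by (rule sum.cong[OF refl]) (use False in \<open>auto simp: blk_def\<close>)
      also have "\<dots> = cnj (blk K w j i)" using j by (simp add: sum.delta)
      also have "\<dots> = (if i = j then 1 else 0)" using False iK by (auto simp: blk_def)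
      finally show ?thesis .
    next
      case jK: True
      have fK: "finite K" using K finite_subset by blast
      have "(\<Sum>r<N. cnj (blk K w r i) * blk K w r j) = (\<Sum>r\<in>K. cnj (blk K w r i) * blk K w r j)"
        by (rule sum.mono_neutral_right) (use K iK in \<open>auto simp: blk_def\<close>)
      also have "\<dots> = (\<Sum>r\<in>K. cnj (w r i) * w r j)"
        by (rule sum.cong[OF refl]) (use iK jK in \<open>auto simp: blk_def\<close>)
      also have "\<dots> = (if i = j then 1 else 0)" using w iK jK by blast
      finally show ?thesis .
    qed
  qed
qed

lemma fam_blk:
  assumes w0: "\<forall>a\<in>K. \<forall>b\<in>K. w 0 a b = (if a = b then 1 else 0)"
    and wd: "\<forall>a\<in>K. \<forall>b\<in>K. ((\<lambda>t. w t a b) has_vector_derivative X a b) (at 0)"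
    and Xz: "\<forall>a b. \<not> (a \<in> K \<and> b \<in> K) \<longrightarrow> X a b = 0"
    and X: "skewH N X"
  shows "fam N (\<lambda>t. blk K (w t)) X"
  unfolding fam_def
proof (intro conjI allI impI)
  fix a b
  show "((\<lambda>t. blk K (w t) a b) has_vector_derivative X a b) (at 0)"
    using wd Xz by (cases "a \<in> K \<and> b \<in> K") (auto simp: blk_def)
next
  fix a b assume "a < N" "b < N"
  show "blk K (w 0) a b = (if a = b then 1 else 0)" using w0 by (auto simp: blk_def)
qed (rule X)

lemma dcos: "((\<lambda>t. complex_of_real (cos t)) has_vector_derivative 0) (at 0)"
  using has_vector_derivative_of_real[OF DERIV_cos[of 0]] by simp
lemma dsin: "((\<lambda>t. complex_of_real (sin t)) has_vector_derivative 1) (at 0)"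
  using has_vector_derivative_of_real[OF DERIV_sin[of 0]] by simp

lemma cs1: "cnj (complex_of_real (cos t)) * complex_of_real (cos t) + cnj (complex_of_real (sin t)) * complex_of_real (sin t) = 1"
proof -
  have "cos t * cos t + sin t * sin t = 1"
    using sin_cos_squared_add[of t] by (simp add: power2_eq_square)
  then have "complex_of_real (cos t) * complex_of_real (cos t) + complex_of_real (sin t) * complex_of_real (sin t) = 1"
    by (metis of_real_add of_real_mult of_real_1)
  then show ?thesis by simp
qed

lemma sum_XE: "k < (N::nat) \<Longrightarrow> k' < N \<Longrightarrow>
  (\<Sum>a<N. \<Sum>b<N. (if a = k \<and> b = k' then c else 0) * G a b) = c * (G k k' :: complex)"
proof -
  assume k: "k < N" and k': "k' < N"
  have "(\<Sum>a<N. \<Sum>b<N. (if a = k \<and> b = k' then c else 0) * G a b) = (\<Sum>a<N. if a = k then c * G a k' else 0)"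
  proof (rule sum.cong[OF refl])
    fix a
    show "(\<Sum>b<N. (if a = k \<and> b = k' then c else 0) * G a b) = (if a = k then c * G a k' else 0)"
    proof (cases "a = k")
      case True
      have "(\<Sum>b<N. (if a = k \<and> b = k' then c else 0) * G a b) = (\<Sum>b<N. if b = k' then c * G a b else 0)"
        by (rule sum.cong[OF refl]) (simp add: True)
      also have "\<dots> = c * G a k'" using sum.delta[of "{..<N}" k' "\<lambda>b. c * G a b"] k' by simp
      finally show ?thesis using True by simp
    qed simp
  qed
  also have "\<dots> = c * G k k'" using k by (simp add: sum.delta)
  finally show ?thesis .
qed


lemma sum_XE2: "k1 < (N::nat) \<Longrightarrow> k2 < N \<Longrightarrow> k3 < N \<Longrightarrow> k4 < N \<Longrightarrow>
  (\<Sum>a<N. \<Sum>b<N. ((if a = k1 \<and> b = k2 then c1 else 0) + (if a = k3 \<and> b = k4 then c2 else 0)) * G a b)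
   = c1 * G k1 k2 + c2 * (G k3 k4 :: complex)"
  by (simp only: distrib_right sum.distrib sum_XE)

lemma skew_aux1: "cnj ((if P then 1 else 0) + (if Q then -1 else (0::complex))) = - ((if Q then 1 else 0) + (if P then -1 else 0))"
  by (cases P; cases Q) simp_all
lemma skew_aux2: "cnj ((if P then \<i> else 0) + (if Q then \<i> else (0::complex))) = - ((if Q then \<i> else 0) + (if P then \<i> else 0))"
  by (cases P; cases Q) simp_all

lemma two_ball: "k \<noteq> k' \<Longrightarrow> (\<forall>a\<in>{k, k'}. \<forall>b\<in>{k, k'}. P a b) \<longleftrightarrow> P k k \<and> P k k' \<and> P k' k \<and> P k' k'"
  by auto
lemma sum2: "k \<noteq> k' \<Longrightarrow> (\<Sum>r\<in>{k, k'}. F r) = F k + (F k' :: complex)"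
  by simp
lemma cs3: "complex_of_real (cos t) * complex_of_real (cos t) + complex_of_real (sin t) * complex_of_real (sin t) = 1"
  using cs1[of t] by simp
lemma cs4: "complex_of_real (sin t) * complex_of_real (sin t) + complex_of_real (cos t) * complex_of_real (cos t) = 1"
  using cs3[of t] by (simp add: add.commute)

lemma cs5: "complex_of_real (cos t) * complex_of_real (cos t) - \<i> * complex_of_real (sin t) * (\<i> * complex_of_real (sin t)) = 1"
proof -
  have "\<i> * x * (\<i> * x) = - (x * x)" for x :: complex
    by (metis complex_i_mult_minus mult.assoc mult.left_commute)
  then show ?thesis using cs3[of t] by simp
qed

lemma Hzero_from:
  assumes f: "f \<in> V_lambda p q N"
  shows "Hzero p (p + q) N f"
  unfolding Hzero_def
proof (intro allI impI)
  fix k k' M assume k: "k < N" and k': "k' < N"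
  show "Hop p (p + q) k k' f M = 0"
  proof (cases "k = k'")
    case True
    define w where "w t = (\<lambda>(a::nat) (b::nat). complex_of_real (cos t) + \<i> * complex_of_real (sin t))" for t :: real
    define X where "X = (\<lambda>a b. if a = k \<and> b = k then \<i> else 0)"
    have F: "fam N (\<lambda>t. blk {k} (w t)) X"
    proof (rule fam_blk)
      show "\<forall>a\<in>{k}. \<forall>b\<in>{k}. w 0 a b = (if a = b then 1 else 0)" by (simp add: w_def)
      show "\<forall>a\<in>{k}. \<forall>b\<in>{k}. ((\<lambda>t. w t a b) has_vector_derivative X a b) (at 0)"
        unfolding w_def X_def using has_vector_derivative_add[OF dcos has_vector_derivative_mult_right[OF dsin, of "\<i>"]]
        by simp
      show "\<forall>a b. \<not> (a \<in> {k} \<and> b \<in> {k}) \<longrightarrow> X a b = 0" by (simp add: X_def)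
      show "skewH N X" by (simp add: skewH_def X_def)
    qed
    have U: "\<forall>t. unitary_mat N (blk {k} (w t))"
    proof
      fix t
      have "cnj (complex_of_real (cos t) + \<i> * complex_of_real (sin t)) * (complex_of_real (cos t) + \<i> * complex_of_real (sin t)) = 1"
        by (simp add: complex_eq_iff)
      then show "unitary_mat N (blk {k} (w t))" using k by (intro unitary_blk) (auto simp: w_def)
    qed
    have "Xop p (p + q) N X f M = 0" by (rule Xop_zero[OF f U F])
    moreover have "Xop p (p + q) N X f M = \<i> * Hop p (p + q) k k f M"
      unfolding Xop_def X_def by (rule sum_XE[OF k k])
    ultimately show ?thesis using True by simp
  next
    case False
    define wR where "wR t = (\<lambda>(a::nat) (b::nat). if a = b then complex_of_real (cos t) else if a = k' then complex_of_real (sin t) else - complex_of_real (sin t))" for t :: real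
    define XR where "XR = (\<lambda>a b. (if a = k' \<and> b = k then 1 else 0) + (if a = k \<and> b = k' then -1 else (0::complex)))"
    define wC where "wC t = (\<lambda>(a::nat) (b::nat). if a = b then complex_of_real (cos t) else \<i> * complex_of_real (sin t))" for t :: real
    define XC where "XC = (\<lambda>a b. (if a = k' \<and> b = k then \<i> else 0) + (if a = k \<and> b = k' then \<i> else 0))"
    have KN: "{k, k'} \<subseteq> {..<N}" using k k' by auto
    have FR: "fam N (\<lambda>t. blk {k, k'} (wR t)) XR"
    proof (rule fam_blk)
      show "\<forall>a\<in>{k, k'}. \<forall>b\<in>{k, k'}. wR 0 a b = (if a = b then 1 else 0)" by (simp add: wR_def)
      show "\<forall>a\<in>{k, k'}. \<forall>b\<in>{k, k'}. ((\<lambda>t. wR t a b) has_vector_derivative XR a b) (at 0)"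
        unfolding two_ball[OF False]
      proof (intro conjI)
        have e: "k' \<noteq> k" using False by simp
        show "((\<lambda>t. wR t k k) has_vector_derivative XR k k) (at 0)" using dcos False e by (simp add: wR_def XR_def)
        show "((\<lambda>t. wR t k k') has_vector_derivative XR k k') (at 0)" using has_vector_derivative_minus[OF dsin] False e by (simp add: wR_def XR_def)
        show "((\<lambda>t. wR t k' k) has_vector_derivative XR k' k) (at 0)" using dsin False e by (simp add: wR_def XR_def)
        show "((\<lambda>t. wR t k' k') has_vector_derivative XR k' k') (at 0)" using dcos False e by (simp add: wR_def XR_def)
      qed
      show "\<forall>a b. \<not> (a \<in> {k, k'} \<and> b \<in> {k, k'}) \<longrightarrow> XR a b = 0"
      proof (intro allI impI)
        fix a b assume "\<not> (a \<in> {k, k'} \<and> b \<in> {k, k'})"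
        then have c1: "(a = k' \<and> b = k) = False" "(a = k \<and> b = k') = False" by blast+
        show "XR a b = 0" unfolding XR_def c1 if_False by simp
      qed
      show "skewH N XR" unfolding skewH_def
      proof (intro allI impI)
        fix a b :: nat
        have sw: "(b = k' \<and> a = k) = (a = k \<and> b = k')" "(b = k \<and> a = k') = (a = k' \<and> b = k)" by blast+
        show "cnj (XR a b) = - XR b a"
          unfolding XR_def sw by (rule skew_aux1)
      qed
    qed
    have UR: "\<forall>t. unitary_mat N (blk {k, k'} (wR t))"
    proof
      fix t
      show "unitary_mat N (blk {k, k'} (wR t))"
      proof (rule unitary_blk[OF KN])
        have e: "k' \<noteq> k" using False by simp
        show "\<forall>a\<in>{k, k'}. \<forall>b\<in>{k, k'}. (\<Sum>r\<in>{k, k'}. cnj (wR t r a) * wR t r b) = (if a = b then 1 else 0)"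
          unfolding two_ball[OF False] sum2[OF False] using False e cs3[of t] cs4[of t]
          by (simp add: wR_def mult.commute)
      qed
    qed
    have FC: "fam N (\<lambda>t. blk {k, k'} (wC t)) XC"
    proof (rule fam_blk)
      show "\<forall>a\<in>{k, k'}. \<forall>b\<in>{k, k'}. wC 0 a b = (if a = b then 1 else 0)" by (simp add: wC_def)
      show "\<forall>a\<in>{k, k'}. \<forall>b\<in>{k, k'}. ((\<lambda>t. wC t a b) has_vector_derivative XC a b) (at 0)"
        unfolding two_ball[OF False]
      proof (intro conjI)
        have e: "k' \<noteq> k" using False by simp
        show "((\<lambda>t. wC t k k) has_vector_derivative XC k k) (at 0)" using dcos False e by (simp add: wC_def XC_def)
        show "((\<lambda>t. wC t k k') has_vector_derivative XC k k') (at 0)" using has_vector_derivative_mult_right[OF dsin, of "\<i>"] False e by (simp add: wC_def XC_def)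
        show "((\<lambda>t. wC t k' k) has_vector_derivative XC k' k) (at 0)" using has_vector_derivative_mult_right[OF dsin, of "\<i>"] False e by (simp add: wC_def XC_def)
        show "((\<lambda>t. wC t k' k') has_vector_derivative XC k' k') (at 0)" using dcos False e by (simp add: wC_def XC_def)
      qed
      show "\<forall>a b. \<not> (a \<in> {k, k'} \<and> b \<in> {k, k'}) \<longrightarrow> XC a b = 0"
      proof (intro allI impI)
        fix a b assume "\<not> (a \<in> {k, k'} \<and> b \<in> {k, k'})"
        then have c1: "(a = k' \<and> b = k) = False" "(a = k \<and> b = k') = False" by blast+
        show "XC a b = 0" unfolding XC_def c1 if_False by simp
      qed
      show "skewH N XC" unfolding skewH_def
      proof (intro allI impI)
        fix a b :: nat
        have sw: "(b = k' \<and> a = k) = (a = k \<and> b = k')" "(b = k \<and> a = k') = (a = k' \<and> b = k)" by blast+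
        show "cnj (XC a b) = - XC b a"
          unfolding XC_def sw by (rule skew_aux2)
      qed
    qed
    have UC: "\<forall>t. unitary_mat N (blk {k, k'} (wC t))"
    proof
      fix t
      show "unitary_mat N (blk {k, k'} (wC t))"
      proof (rule unitary_blk[OF KN])
        have e: "k' \<noteq> k" using False by simp
        show "\<forall>a\<in>{k, k'}. \<forall>b\<in>{k, k'}. (\<Sum>r\<in>{k, k'}. cnj (wC t r a) * wC t r b) = (if a = b then 1 else 0)"
          unfolding two_ball[OF False] sum2[OF False] using False e cs3[of t] cs4[of t] cs5[of t]
          by (simp add: wC_def mult.commute)
      qed
    qed
    have "Xop p (p + q) N XR f M = 0" by (rule Xop_zero[OF f UR FR])
    moreover have "Xop p (p + q) N XR f M = 1 * Hop p (p + q) k' k f M + (-1) * Hop p (p + q) k k' f M"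
      unfolding Xop_def XR_def by (rule sum_XE2[OF k' k k k'])
    moreover have "Xop p (p + q) N XC f M = 0" by (rule Xop_zero[OF f UC FC])
    moreover have "Xop p (p + q) N XC f M = \<i> * Hop p (p + q) k' k f M + \<i> * Hop p (p + q) k k' f M"
      unfolding Xop_def XC_def by (rule sum_XE2[OF k' k k k'])
    ultimately have e1: "Hop p (p + q) k' k f M = Hop p (p + q) k k' f M"
      and e2: "\<i> * (Hop p (p + q) k' k f M + Hop p (p + q) k k' f M) = 0"
      by (simp_all add: distrib_left)
    from e2 have "Hop p (p + q) k' k f M + Hop p (p + q) k k' f M = 0" by simp
    then show ?thesis unfolding e1 by simp
  qed
qed


lemma good_of_AV:
  assumes "f \<in> A_V p q N"
  shows "good f"
  unfolding good_def
proof (intro allI impI)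
  fix S :: "gix set" and m :: "gix \<Rightarrow> nat" assume inf: "infinite S"
  show "f (S, m) = 0"
  proof (rule ccontr)
    assume "f (S, m) \<noteq> 0"
    then have "valid_mono p q N (S, m)" using assms by (auto simp: A_V_def)
    then have "S \<subseteq> {a. valid_ix p q N a}" by (simp add: valid_mono_def)
    then have "finite S" using finite_valid finite_subset by blast
    then show False using inf by simp
  qed
qed

theorem mainTheorem8:
  fixes p q N l :: nat and f :: fock
  assumes "1 \<le> p" and "1 \<le> q" and "1 \<le> N" and "1 \<le> l"
    and "f \<in> V_lambda p q N"
  shows "casimir_op p q N l f = (\<lambda>_. 0)"
proof -
  have fA: "f \<in> A_V p q N" using assms(5) by (simp add: V_lambda_def)
  show ?thesis
    by (rule cas_zero[OF good_of_AV[OF fA] Hzero_from[OF assms(5)] assms(4)])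
qed

end
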